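(* Let $G$ be a graph with $m$ edges and maximum degree $\Delta$, let $\epsilon\in(0,1)$ with $(1+\epsilon/2)\Delta$ an integer, and $\kappa,\ell\in\mathbb{N}$. Run Stage 1 (described in the context) on $(G,\kappa,\ell)$. For $1\le i\le m$ let $\phi_i$ be the coloring at the start of the $i$-th iteration, $C_i$ the color sample drawn in step (b) of the $i$-th iteration, and for a vertex $v$ let $d_i(v)$ be the indicator that an edge is flagged in iteration $i$ and $v$ is an endpoint of that edge (with $d_i(v)=0$ if iteration $i$ does not occur). Then $$\Pr\big[d_i(v)=1\ \big|\ \phi_i,\,C_i\big]\ \le\ \frac{\Delta\kappa^2}{\ell\,(m-i+1)}.$$ In particular, if $\ell\ge 50\kappa^2\ln n/\epsilon$, then $\Pr[d_i(v)=1\mid\phi_i,C_i]\le \dfrac{\epsilon\Delta}{50(m-i+1)\ln n}$.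
   Context: Let $G=(V,E)$ be a simple graph and $q\in\mathbb{N}$. A partial $q$-edge-coloring is a map $\phi:E\to[q]\cup\{\mathsf{blank}\}$ ($\mathsf{blank}$ = uncolored); it is proper if any two distinct colored edges sharing an endpoint get different colors. For $x\in V$, $M(\phi,x):=[q]\setminus\{\phi(xy): y\in N_G(x)\}$ is the set of colors missing at $x$. A fan under $\phi$ is a sequence $F=(x,y_0,\dots,y_{k-1})$ of distinct neighbors $y_i$ of $x$ with $\phi(xy_0)=\mathsf{blank}$ and $\phi(xy_i)\in M(\phi,y_{i-1})$ for $1\le i<k$; $\mathsf{length}(F)=k$. Shifting $F$ produces the coloring $\psi$ with $\psi(xy_i)=\phi(xy_{i+1})$ for $0\le i<k-1$, $\psi(xy_{k-1})=\mathsf{blank}$, and $\psi=\phi$ elsewhere. For $\alpha,\beta\in[q]$, an $\alpha\beta$-path under $\phi$ is a sequence $P=(x_0,\dots,x_s)$ of distinct vertices with $\phi(x_0x_1)=\alpha$ and the colors of $x_ix_{i+1}$ alternating $\alpha,\beta,\alpha,\dots$; $\mathsf{length}(P)=s$, $\mathsf{vEnd}(P)=x_s$. The path $(x_0)$ has length $0$. Flipping $P$ interchanges the colors $\alpha$ and $\beta$ on the edges of $P$. Procedure $\mathsf{MakeFan}(\phi,xy,x,C)$: set $F\gets(x,y)$, $z\gets y$, $k\gets 1$ (and write $y_0=y$). Repeat: if $C\cap M(\phi,z)=\varnothing$, return $\mathsf{FAIL}$. Let $\eta\gets\min (M(\phi,z)\cap C)$. Set $z\gets$ the neighbor $w$ of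 $x$ with $\phi(xw)=\eta$, or $z\gets\mathsf{blank}$ if no such $w$ exists. If $z=\mathsf{blank}$, return $(F,\eta,k)$. If $z=y_j$ for some vertex $y_j$ of $F$ other than $x$, return $(F,\eta,j)$. Otherwise set $y_k\gets z$, append $y_k$ to $F$, and $k\gets k+1$. Procedure $\mathsf{VizingChain}(\phi,xy,x,C,\ell)$: run $\mathsf{MakeFan}(\phi,xy,x,C)$; if it returns $\mathsf{FAIL}$, return $\mathsf{FAIL}$. Otherwise let $(F,\alpha,j)$ be its output. If $j=\mathsf{length}(F)$, return $((F,(x)),\alpha)$. If $M(\phi,x)\cap C=\varnothing$, return $\mathsf{FAIL}$. Otherwise let $\beta\gets\min(M(\phi,x)\cap C)$, let $P$ be the maximal $\alpha\beta$-path starting at $x$ if its length is at most $\ell$, and otherwise the initial segment of it consisting of its first $\ell$ edges; return $((F,P),\alpha)$. Stage 1 on $(G,\kappa,\ell)$, with $q'=(1+\epsilon/2)\Delta$ and all colorings taking values in $[q']\cup\{\mathsf{blank}\}$: set $U\gets E$ and $\phi\equiv\mathsf{blank}$. While $U\ne\varnothing$: (a) pick $e\in U$ uniformly at random and an endpoint $x$ of $e$ uniformly at random; (b) form $C$ by sampling $\kappa$ times with replacement, uniformly from $[q']$; (c) run $\mathsf{VizingChain}(\phi,e,x,C,\ell)$; if it returns $\mathsf{FAIL}$, return $\mathsf{FAIL}$; otherwise let $((F,P),\alpha)$ be its output with $F=(x,y_0,\dots,y_{k-1})$, $P=(x_0=x,\dots,x_s)$. (d) If $s=0$: shift $F$,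 color $xy_{k-1}$ with $\alpha$, remove $e$ from $U$, and go to the next iteration. (e) If $s=\ell$: choose $\ell'\in[\ell]$ uniformly at random, uncolor the edge $x_{\ell'-1}x_{\ell'}$ (this edge is said to be flagged in this iteration), and let $P'=(x_0,\dots,x_{\ell'-1})$; if $0<s<\ell$, let $P'=P$. (f) Let $j$ be such that $y_j=x_1$ and $F'=(x,y_0,\dots,y_{j-1})$. Flip the path $P'$. If $\mathsf{vEnd}(P')=y_{j-1}$, shift $F$ and color $xy_{k-1}$ with $\alpha$; otherwise shift $F'$ and color $xy_{j-1}$ with $\alpha$. (g) Remove $e$ from $U$. Each iteration removes exactly one edge from $U$, so at the start of iteration $i$ we have $|U|=m-i+1$, and there are at most $m$ iterations. *)

theory Defs
  imports "HOL-Probability.Probability_Mass_Function"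
begin

definition simple_graph :: "'a set \<Rightarrow> 'a set set \<Rightarrow> bool" where
  "simple_graph V E \<longleftrightarrow> finite V \<and> (\<forall>e\<in>E. e \<subseteq> V \<and> card e = 2)"

definition degree :: "'a set set \<Rightarrow> 'a \<Rightarrow> nat" where
  "degree E v = card {e\<in>E. v \<in> e}"

definition max_degree :: "'a set \<Rightarrow> 'a set set \<Rightarrow> nat" where
  "max_degree V E = Max (insert 0 (degree E ` V))"

(* partial edge colorings: None = blank *)
type_synonym 'a coloring = "'a set \<Rightarrow> nat option"

definition missing :: "'a set set \<Rightarrow> 'a coloring \<Rightarrow> nat \<Rightarrow> 'a \<Rightarrow> nat set" where
  "missing E \<phi> q z = {1..q} - {c. \<exists>y. {z,y} \<in> E \<and> \<phi> {z,y} = Some c}"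

(* MakeFan loop. F is the list y_0,...,y_{k-1}; returns (F, eta, j); None = FAIL.
   The fuel argument is never exhausted (see make_fan). *)
fun fan_loop :: "nat \<Rightarrow> 'a set set \<Rightarrow> 'a coloring \<Rightarrow> nat \<Rightarrow> 'a \<Rightarrow> nat set \<Rightarrow> 'a list
                  \<Rightarrow> ('a list \<times> nat \<times> nat) option" where
  "fan_loop 0 E \<phi> q x C F = None"
| "fan_loop (Suc n) E \<phi> q x C F =
     (let z = last F in
      if C \<inter> missing E \<phi> q z = {} then None
      else let \<eta> = Min (missing E \<phi> q z \<inter> C) in
        if \<exists>w. {x,w} \<in> E \<and> \<phi> {x,w} = Some \<eta> then
          (let w = (SOME w. {x,w} \<in> E \<and> \<phi> {x,w} = Some \<eta>) in
           if w \<in> set F then Some (F, \<eta>, LEAST j. F ! j = w)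
           else fan_loop n E \<phi> q x C (F @ [w]))
        else Some (F, \<eta>, length F))"

(* MakeFan(phi, e, x, C): y is the other endpoint of e.  Each non-terminating
   round appends a new neighbour of x, so card E + 1 rounds always suffice. *)
definition make_fan :: "'a set set \<Rightarrow> 'a coloring \<Rightarrow> nat \<Rightarrow> 'a set \<Rightarrow> 'a \<Rightarrow> nat set
                        \<Rightarrow> ('a list \<times> nat \<times> nat) option" where
  "make_fan E \<phi> q e x C = fan_loop (card E + 1) E \<phi> q x C [the_elem (e - {x})]"

fun alt_walk :: "nat \<Rightarrow> 'a set set \<Rightarrow> 'a coloring \<Rightarrow> 'a \<Rightarrow> nat \<Rightarrow> nat \<Rightarrow> 'a list \<Rightarrow> 'a list" where
  "alt_walk 0 E \<phi> u c d vs = vs"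
| "alt_walk (Suc n) E \<phi> u c d vs =
     (if \<exists>w. {u,w} \<in> E \<and> \<phi> {u,w} = Some c then
        (let w = (SOME w. {u,w} \<in> E \<and> \<phi> {u,w} = Some c) in
         if w \<in> set vs then vs else alt_walk n E \<phi> w d c (vs @ [w]))
      else vs)"

definition ab_path :: "'a set set \<Rightarrow> 'a coloring \<Rightarrow> 'a \<Rightarrow> nat \<Rightarrow> nat \<Rightarrow> nat \<Rightarrow> 'a list" where
  "ab_path E \<phi> x \<alpha> \<beta> l = alt_walk l E \<phi> x \<alpha> \<beta> [x]"

(* VizingChain: returns ((F, P), alpha) with F = [y_0..y_{k-1}] and P = [x_0..x_s]; None = FAIL *)
definition vizing_chain :: "'a set set \<Rightarrow> 'a coloring \<Rightarrow> nat \<Rightarrow> 'a set \<Rightarrow> 'a \<Rightarrow> nat set \<Rightarrow> nat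
                            \<Rightarrow> (('a list \<times> 'a list) \<times> nat) option" where
  "vizing_chain E \<phi> q e x C l =
     (case make_fan E \<phi> q e x C of
        None \<Rightarrow> None
      | Some (F, \<alpha>, j) \<Rightarrow>
          if j = length F then Some ((F, [x]), \<alpha>)
          else if missing E \<phi> q x \<inter> C = {} then None
          else Some ((F, ab_path E \<phi> x \<alpha> (Min (missing E \<phi> q x \<inter> C)) l), \<alpha>))"

fun shift_fan :: "'a coloring \<Rightarrow> 'a \<Rightarrow> 'a list \<Rightarrow> 'a coloring" where
  "shift_fan \<phi> x [] = \<phi>"
| "shift_fan \<phi> x [y] = \<phi>({x,y} := None)"
| "shift_fan \<phi> x (y # z # ys) = (shift_fan \<phi> x (z # ys))({x,y} := \<phi> {x,z})"

definition swap_col :: "nat \<Rightarrow> nat \<Rightarrow> nat option \<Rightarrow> nat option" where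
  "swap_col \<alpha> \<beta> c = (case c of None \<Rightarrow> None
      | Some a \<Rightarrow> Some (if a = \<alpha> then \<beta> else if a = \<beta> then \<alpha> else a))"

fun flip_path :: "'a coloring \<Rightarrow> nat \<Rightarrow> nat \<Rightarrow> 'a list \<Rightarrow> 'a coloring" where
  "flip_path \<phi> \<alpha> \<beta> (u # w # rest) =
     (flip_path \<phi> \<alpha> \<beta> (w # rest))({u,w} := swap_col \<alpha> \<beta> (\<phi> {u,w}))"
| "flip_path \<phi> \<alpha> \<beta> _ = \<phi>"

(* steps (d)-(f) of one iteration of Stage 1, given the output of VizingChain;
   returns the new coloring and the flagged edge (if any) *)
definition stage1_update :: "'a set set \<Rightarrow> 'a coloring \<Rightarrow> nat \<Rightarrow> nat \<Rightarrow> 'a \<Rightarrow> nat set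
        \<Rightarrow> 'a list \<Rightarrow> 'a list \<Rightarrow> nat \<Rightarrow> ('a coloring \<times> 'a set option) pmf" where
  "stage1_update E \<phi> q l x C F P \<alpha> =
     (let s = length P - 1 in
      if s = 0 then return_pmf ((shift_fan \<phi> x F)({x, last F} := Some \<alpha>), None)
      else
        let \<beta> = Min (missing E \<phi> q x \<inter> C);
            j = (LEAST j. F ! j = P ! 1)
        in map_pmf
             (\<lambda>(\<phi>1, P', fl).
                let \<phi>2 = flip_path \<phi>1 \<alpha> \<beta> P' in
                if last P' = F ! (j - 1)
                then ((shift_fan \<phi>2 x F)({x, last F} := Some \<alpha>), fl)
                else ((shift_fan \<phi>2 x (take j F))({x, F ! (j - 1)} := Some \<alpha>), fl))
             (if s = l then
                map_pmf (\<lambda>l'. (\<phi>({P ! (l' - 1), P ! l'} := None), take l' P,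
                                Some {P ! (l' - 1), P ! l'}))
                        (pmf_of_set {1..l})
              else return_pmf (\<phi>, P, None)))"

fun sample_list :: "nat \<Rightarrow> nat set \<Rightarrow> nat list pmf" where
  "sample_list 0 S = return_pmf []"
| "sample_list (Suc k) S = bind_pmf (pmf_of_set S) (\<lambda>c. map_pmf (Cons c) (sample_list k S))"

(* record of one iteration: (coloring at its start, colour sample C, flagged edge) *)
type_synonym 'a iter_record = "'a coloring \<times> nat set \<times> 'a set option"

(* Stage 1 loop; the output is the list of iterations that occurred.  After a FAIL
   (recorded with no flagged edge) no further iteration occurs. *)
fun stage1_loop :: "nat \<Rightarrow> 'a set set \<Rightarrow> nat \<Rightarrow> nat \<Rightarrow> nat \<Rightarrow> 'a set set \<Rightarrow> 'a coloring
                    \<Rightarrow> 'a iter_record list pmf" where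
  "stage1_loop 0 E q \<kappa> l U \<phi> = return_pmf []"
| "stage1_loop (Suc n) E q \<kappa> l U \<phi> =
     (if U = {} then return_pmf [] else
      bind_pmf (pmf_of_set U) (\<lambda>e.
      bind_pmf (pmf_of_set e) (\<lambda>x.
      bind_pmf (map_pmf set (sample_list \<kappa> {1..q})) (\<lambda>C.
        case vizing_chain E \<phi> q e x C l of
          None \<Rightarrow> return_pmf [(\<phi>, C, None)]
        | Some ((F, P), \<alpha>) \<Rightarrow>
            bind_pmf (stage1_update E \<phi> q l x C F P \<alpha>) (\<lambda>(\<phi>', fl).
            map_pmf (Cons (\<phi>, C, fl)) (stage1_loop n E q \<kappa> l (U - {e}) \<phi>'))))))"

definition stage1 :: "'a set set \<Rightarrow> nat \<Rightarrow> nat \<Rightarrow> nat \<Rightarrow> 'a iter_record list pmf" where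
  "stage1 E q \<kappa> l = stage1_loop (card E) E q \<kappa> l E (\<lambda>_. None)"

(* phi_i, C_i (None if iteration i does not occur) and d_i(v) *)
definition phi_at :: "'a iter_record list \<Rightarrow> nat \<Rightarrow> 'a coloring option" where
  "phi_at t i = (if 1 \<le> i \<and> i \<le> length t then Some (fst (t ! (i - 1))) else None)"

definition C_at :: "'a iter_record list \<Rightarrow> nat \<Rightarrow> nat set option" where
  "C_at t i = (if 1 \<le> i \<and> i \<le> length t then Some (fst (snd (t ! (i - 1)))) else None)"

definition flagged_at :: "'a iter_record list \<Rightarrow> nat \<Rightarrow> 'a \<Rightarrow> bool" where
  "flagged_at t i v \<longleftrightarrow> 1 \<le> i \<and> i \<le> length t \<and>
      (\<exists>f. snd (snd (t ! (i - 1))) = Some f \<and> v \<in> f)"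

end

theory Submission
  imports Defs
begin

lemma prob_cond_pmf:
  assumes "set_pmf p \<inter> A \<noteq> {}"
  shows "measure_pmf.prob (cond_pmf p A) B = measure_pmf.prob p (A \<inter> B) / measure_pmf.prob p A"
proof -
  have "measure_pmf (cond_pmf p A) = uniform_measure (measure_pmf p) A"
    using cond_pmf.rep_eq[OF assms] .
  moreover have "emeasure (measure_pmf p) A \<noteq> 0"
    using assms by (simp add: measure_pmf.emeasure_eq_measure measure_pmf_zero_iff)
  ultimately show ?thesis
    by (simp add: measure_pmf.emeasure_eq_measure)
qed

lemma bind_le:
  assumes "\<And>y. y \<in> set_pmf p \<Longrightarrow> measure_pmf.prob (f y) S \<le> K * measure_pmf.prob (f y) T"
    and "K \<ge> 0"
  shows "measure_pmf.prob (bind_pmf p f) S \<le> K * measure_pmf.prob (bind_pmf p f) T"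
proof -
  have "ennreal (measure_pmf.prob (bind_pmf p f) S) = emeasure (bind_pmf p f) S"
    by (simp add: measure_pmf.emeasure_eq_measure)
  also have "\<dots> = (\<integral>\<^sup>+y. emeasure (f y) S \<partial>p)" by simp
  also have "\<dots> \<le> (\<integral>\<^sup>+y. ennreal K * emeasure (f y) T \<partial>p)"
    apply (rule nn_integral_mono_AE)
    using assms by (auto simp: AE_measure_pmf_iff measure_pmf.emeasure_eq_measure ennreal_mult[symmetric])
  also have "\<dots> = ennreal K * (\<integral>\<^sup>+y. emeasure (f y) T \<partial>p)"
    by (simp add: nn_integral_cmult)
  also have "\<dots> = ennreal K * emeasure (bind_pmf p f) T" by simp
  also have "\<dots> = ennreal (K * measure_pmf.prob (bind_pmf p f) T)"
    using assms(2) by (simp add: measure_pmf.emeasure_eq_measure ennreal_mult)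
  finally show ?thesis using assms(2) by (simp add: ennreal_le_iff)
qed


definition proper :: "'a coloring \<Rightarrow> bool" where
  "proper \<phi> \<longleftrightarrow> (\<forall>u w1 w2 c. \<phi> {u,w1} = Some c \<longrightarrow> \<phi> {u,w2} = Some c \<longrightarrow> w1 = w2)"

definition supp_ok :: "'a set set \<Rightarrow> 'a coloring \<Rightarrow> bool" where
  "supp_ok E \<phi> \<longleftrightarrow> (\<forall>f. \<phi> f \<noteq> None \<longrightarrow> f \<in> E)"

definition cfree :: "'a coloring \<Rightarrow> 'a \<Rightarrow> nat \<Rightarrow> bool" where
  "cfree \<phi> z c \<longleftrightarrow> (\<forall>y. \<phi> {z,y} \<noteq> Some c)"

definition pcol :: "nat \<Rightarrow> nat \<Rightarrow> nat \<Rightarrow> nat" where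
  "pcol \<alpha> \<beta> t = (if even t then \<alpha> else \<beta>)"

definition altp :: "'a coloring \<Rightarrow> nat \<Rightarrow> nat \<Rightarrow> 'a list \<Rightarrow> bool" where
  "altp \<phi> \<alpha> \<beta> P \<longleftrightarrow> (\<forall>t. Suc t < length P \<longrightarrow> \<phi> {P!t, P!Suc t} = Some (pcol \<alpha> \<beta> t))"

lemma properD: "proper \<phi> \<Longrightarrow> \<phi> {u,w1} = Some c \<Longrightarrow> \<phi> {u,w2} = Some c \<Longrightarrow> w1 = w2"
  unfolding proper_def by blast

lemma properD': "proper \<phi> \<Longrightarrow> \<phi> {w1,u} = Some c \<Longrightarrow> \<phi> {u,w2} = Some c \<Longrightarrow> w1 = w2"
  unfolding proper_def by (metis insert_commute)

lemma freeD: "cfree \<phi> z c \<Longrightarrow> \<phi> {z,y} = Some c \<Longrightarrow> False"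
  unfolding cfree_def by blast

lemma freeD': "cfree \<phi> z c \<Longrightarrow> \<phi> {y,z} = Some c \<Longrightarrow> False"
  unfolding cfree_def by (metis insert_commute)

lemma missing_free: "supp_ok E \<phi> \<Longrightarrow> c \<in> missing E \<phi> q z \<Longrightarrow> cfree \<phi> z c"
  unfolding supp_ok_def missing_def cfree_def by fastforce

lemma col_Suc_Suc[simp]: "pcol \<alpha> \<beta> (Suc (Suc t)) = pcol \<alpha> \<beta> t"
  by (simp add: pcol_def)

lemma col_neq_Suc: "\<alpha> \<noteq> \<beta> \<Longrightarrow> pcol \<alpha> \<beta> (Suc t) \<noteq> pcol \<alpha> \<beta> t"
  by (simp add: pcol_def)

lemma col_in: "pcol \<alpha> \<beta> t = \<alpha> \<or> pcol \<alpha> \<beta> t = \<beta>"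
  by (simp add: pcol_def)

lemma doubleton_same: "{u,w1} = {u,w2} \<Longrightarrow> w1 = w2"
  by (metis doubleton_eq_iff)

lemma alt_snoc:
  assumes "altp \<phi> \<alpha> \<beta> vs" "vs \<noteq> []" "\<phi> {last vs, w} = Some (pcol \<alpha> \<beta> (length vs - 1))"
  shows "altp \<phi> \<alpha> \<beta> (vs @ [w])"
  unfolding altp_def
proof (intro allI impI)
  fix t assume t: "Suc t < length (vs @ [w])"
  show "\<phi> {(vs @ [w]) ! t, (vs @ [w]) ! Suc t} = Some (pcol \<alpha> \<beta> t)"
  proof (cases "Suc t < length vs")
    case True then show ?thesis using assms(1) by (simp add: altp_def nth_append)
  next
    case False
    then have "t = length vs - 1" using t by simp
    then show ?thesis using assms(2,3) False
      by (simp add: nth_append last_conv_nth)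
  qed
qed

lemma alt_walk_props:
  assumes "vs \<noteq> []" "distinct vs" "last vs = u" "altp \<phi> \<alpha> \<beta> vs"
    "c = pcol \<alpha> \<beta> (length vs - 1)" "d = pcol \<alpha> \<beta> (length vs)"
  shows "let R = alt_walk n E \<phi> u c d vs in
    (\<exists>ys. R = vs @ ys) \<and> distinct R \<and> altp \<phi> \<alpha> \<beta> R \<and> length R \<le> length vs + n \<and>
    (length R < length vs + n \<longrightarrow>
       (\<forall>w. {last R, w} \<in> E \<longrightarrow> \<phi> {last R, w} \<noteq> Some (pcol \<alpha> \<beta> (length R - 1))) \<or>
       (\<exists>w\<in>set R. \<phi> {last R, w} = Some (pcol \<alpha> \<beta> (length R - 1))))"
  using assms
proof (induction n arbitrary: u c d vs)
  case 0
  then show ?case by simp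
next
  case (Suc n)
  show ?case
  proof (cases "\<exists>w. {u,w} \<in> E \<and> \<phi> {u,w} = Some c")
    case False
    then show ?thesis using Suc.prems by auto
  next
    case True
    define w where "w = (SOME w. {u,w} \<in> E \<and> \<phi> {u,w} = Some c)"
    have w: "{u,w} \<in> E \<and> \<phi> {u,w} = Some c" unfolding w_def using True by (rule someI_ex)
    show ?thesis
    proof (cases "w \<in> set vs")
      case True
      have eq: "alt_walk (Suc n) E \<phi> u c d vs = vs"
        using \<open>\<exists>w. _\<close> True by (simp add: w_def[symmetric] Let_def)
      show ?thesis unfolding eq Let_def using Suc.prems w True by auto
    next
      case False
      have eq: "alt_walk (Suc n) E \<phi> u c d vs = alt_walk n E \<phi> w d c (vs @ [w])"
        using \<open>\<exists>w. _\<close> False by (simp add: w_def[symmetric] Let_def)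
      have a2: "altp \<phi> \<alpha> \<beta> (vs @ [w])"
        using alt_snoc[OF Suc.prems(4) Suc.prems(1)] w Suc.prems(3,5) by simp
      have c2: "c = pcol \<alpha> \<beta> (length (vs @ [w]))"
        using Suc.prems(1,5) by (cases vs) (auto simp: pcol_def)
      have IH: "let R = alt_walk n E \<phi> w d c (vs @ [w]) in
    (\<exists>ys. R = (vs @ [w]) @ ys) \<and> distinct R \<and> altp \<phi> \<alpha> \<beta> R \<and> length R \<le> length (vs @ [w]) + n \<and>
    (length R < length (vs @ [w]) + n \<longrightarrow>
       (\<forall>w. {last R, w} \<in> E \<longrightarrow> \<phi> {last R, w} \<noteq> Some (pcol \<alpha> \<beta> (length R - 1))) \<or>
       (\<exists>w\<in>set R. \<phi> {last R, w} = Some (pcol \<alpha> \<beta> (length R - 1))))"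
        apply (rule Suc.IH)
        using Suc.prems False a2 c2 by auto
      obtain ys where y1: "alt_walk n E \<phi> w d c (vs @ [w]) = (vs @ [w]) @ ys" using IH by (auto simp: Let_def)
      show ?thesis unfolding eq using IH y1 by (simp only: Let_def length_append_singleton add_Suc_shift) (metis append_assoc)
    qed
  qed
qed

lemma ab_path_props:
  fixes E :: "'a set set" and \<phi> :: "'a coloring"
  assumes "P = ab_path E \<phi> x \<alpha> \<beta> l"
  shows "P \<noteq> [] \<and> P ! 0 = x \<and> distinct P \<and> altp \<phi> \<alpha> \<beta> P \<and> length P \<le> Suc l \<and>
    (length P < Suc l \<longrightarrow>
       (\<forall>w. {last P, w} \<in> E \<longrightarrow> \<phi> {last P, w} \<noteq> Some (pcol \<alpha> \<beta> (length P - 1))) \<or>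
       (\<exists>w\<in>set P. \<phi> {last P, w} = Some (pcol \<alpha> \<beta> (length P - 1))))"
proof -
  have "let R = alt_walk l E \<phi> x \<alpha> \<beta> [x] in
    (\<exists>ys. R = [x] @ ys) \<and> distinct R \<and> altp \<phi> \<alpha> \<beta> R \<and> length R \<le> length [x] + l \<and>
    (length R < length [x] + l \<longrightarrow>
       (\<forall>w. {last R, w} \<in> E \<longrightarrow> \<phi> {last R, w} \<noteq> Some (pcol \<alpha> \<beta> (length R - 1))) \<or>
       (\<exists>w\<in>set R. \<phi> {last R, w} = Some (pcol \<alpha> \<beta> (length R - 1))))"
    by (rule alt_walk_props) (auto simp: altp_def pcol_def)
  then show ?thesis unfolding assms ab_path_def Let_def by auto
qed

lemma no_revisit:
  assumes pr: "proper \<phi>" and ab: "\<alpha> \<noteq> \<beta>" and fx: "cfree \<phi> (P!0) \<beta>"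
    and d: "distinct P" and a: "altp \<phi> \<alpha> \<beta> P" and ne: "P \<noteq> []"
    and w: "w \<in> set P" and e: "\<phi> {last P, w} = Some (pcol \<alpha> \<beta> (length P - 1))"
    and sing: "\<And>z. \<phi> {z} = None"
  shows False
proof -
  define s where "s = length P - 1"
  have ls: "last P = P ! s" using ne by (simp add: s_def last_conv_nth)
  have sl: "s < length P" using ne by (simp add: s_def)
  obtain r where r: "r < length P" "w = P ! r" using w by (auto simp: in_set_conv_nth)
  have e': "\<phi> {P!s, P!r} = Some (pcol \<alpha> \<beta> s)" using e ls r s_def by simp
  have ae: "\<And>t. Suc t < length P \<Longrightarrow> \<phi> {P!t, P!Suc t} = Some (pcol \<alpha> \<beta> t)"
    using a by (simp add: altp_def)
  show False
  proof (cases "r = s")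
    case True then show False using e' sing by simp
  next
    case False
    then have rs: "r < s" using r sl s_def by simp
    show False
    proof (cases r)
      case 0
      show False
      proof (cases "pcol \<alpha> \<beta> s = \<beta>")
        case True
        then show False using fx e' 0 by (metis freeD')
      next
        case False
        then have "pcol \<alpha> \<beta> s = \<alpha>" using col_in by metis
        moreover have "\<phi> {P!0, P!1} = Some \<alpha>" using ae[of 0] rs sl by (simp add: pcol_def)
        ultimately have "P!s = P!1" using e' 0 pr by (metis properD')
        then have "s = 1" using d sl rs by (simp add: nth_eq_iff_index_eq)
        then show False using False by (simp add: pcol_def)
      qed
    next
      case (Suc r')
      have e1: "\<phi> {P!r', P!r} = Some (pcol \<alpha> \<beta> r')" using ae[of r'] Suc rs sl by simp
      have e2: "\<phi> {P!r, P!Suc r} = Some (pcol \<alpha> \<beta> r)" using ae[of r] rs sl by simp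
      have "pcol \<alpha> \<beta> r \<noteq> pcol \<alpha> \<beta> r'" using Suc col_neq_Suc[OF ab] by simp
      then consider "pcol \<alpha> \<beta> s = pcol \<alpha> \<beta> r" | "pcol \<alpha> \<beta> s = pcol \<alpha> \<beta> r'" using col_in by metis
      then show False
      proof cases
        case 1
        then have "P!s = P!Suc r" using e' e2 pr by (metis properD' insert_commute)
        then have "s = Suc r" using d sl rs by (simp add: nth_eq_iff_index_eq)
        then show False using 1 col_neq_Suc[OF ab] by metis
      next
        case 2
        then have "P!s = P!r'" using e' e1 pr by (metis properD insert_commute)
        then have "s = r'" using d sl rs Suc by (simp add: nth_eq_iff_index_eq)
        then show False using rs Suc by simp
      qed
    qed
  qed
qed


definition fanI :: "'a set set \<Rightarrow> 'a coloring \<Rightarrow> nat \<Rightarrow> 'a \<Rightarrow> 'a list \<Rightarrow> bool" where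
  "fanI E \<phi> q x F \<longleftrightarrow> F \<noteq> [] \<and> distinct F \<and> x \<notin> set F \<and> (\<forall>y\<in>set F. {x,y} \<in> E) \<and>
     (\<forall>i. 0 < i \<and> i < length F \<longrightarrow> (\<exists>c. \<phi> {x, F!i} = Some c \<and> c \<in> missing E \<phi> q (F!(i-1))))"

lemma fan_loop_props:
  assumes "fan_loop n E \<phi> q x C F = Some (F', \<eta>, j)" "fanI E \<phi> q x F"
    and sg: "\<forall>f\<in>E. card f = 2"
  shows "fanI E \<phi> q x F' \<and> F' ! 0 = F ! 0 \<and> \<eta> \<in> missing E \<phi> q (last F') \<and> \<eta> \<in> C \<and>
    ((j = length F' \<and> \<not>(\<exists>w. {x,w} \<in> E \<and> \<phi> {x,w} = Some \<eta>)) \<or>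
     (j < length F' \<and> \<phi> {x, F'!j} = Some \<eta>))"
  using assms(1,2)
proof (induction n arbitrary: F)
  case 0
  then show ?case by simp
next
  case (Suc n)
  define z where "z = last F"
  have ne: "C \<inter> missing E \<phi> q z \<noteq> {}"
    using Suc.prems(1) by (auto simp: z_def Let_def split: if_splits)
  define \<eta>0 where "\<eta>0 = Min (missing E \<phi> q z \<inter> C)"
  have fin: "finite (missing E \<phi> q z \<inter> C)" by (simp add: missing_def)
  have \<eta>0: "\<eta>0 \<in> missing E \<phi> q z \<inter> C" unfolding \<eta>0_def
    using fin ne by (metis Int_commute Min_in)
  show ?case
  proof (cases "\<exists>w. {x,w} \<in> E \<and> \<phi> {x,w} = Some \<eta>0")
    case False
    then have h: "(\<exists>w. {x,w} \<in> E \<and> \<phi> {x,w} = Some \<eta>0) = False" by simp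
    have "Some (F, \<eta>0, length F) = Some (F', \<eta>, j)"
      using Suc.prems(1) ne by (simp add: z_def[symmetric] \<eta>0_def[symmetric] Let_def h del: not_ex) blast
    then show ?thesis using False \<eta>0 Suc.prems(2) by (auto simp: z_def)
  next
    case True
    define w where "w = (SOME w. {x,w} \<in> E \<and> \<phi> {x,w} = Some \<eta>0)"
    have w: "{x,w} \<in> E \<and> \<phi> {x,w} = Some \<eta>0" unfolding w_def using True by (rule someI_ex)
    show ?thesis
    proof (cases "w \<in> set F")
      case True
      then have "Some (F, \<eta>0, LEAST j. F ! j = w) = Some (F', \<eta>, j)"
        using Suc.prems(1) ne \<open>\<exists>w. _\<close>
        by (simp add: z_def[symmetric] \<eta>0_def[symmetric] w_def[symmetric] Let_def) blast
      then have F': "F' = F" "\<eta> = \<eta>0" "j = (LEAST j. F ! j = w)" by auto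
      obtain k where k: "k < length F" "F ! k = w" using True by (auto simp: in_set_conv_nth)
      have "F ! j = w" unfolding F'(3) using k(2) by (rule LeastI)
      moreover have "j \<le> k" unfolding F'(3) using k(2) by (rule Least_le)
      ultimately show ?thesis using F' k w \<eta>0 Suc.prems(2) by (auto simp: z_def)
    next
      case False
      have eq: "fan_loop n E \<phi> q x C (F @ [w]) = Some (F', \<eta>, j)"
        using Suc.prems(1) ne \<open>\<exists>w. _\<close> False
        by (simp add: z_def[symmetric] \<eta>0_def[symmetric] w_def[symmetric] Let_def)
      have wx: "w \<noteq> x"
      proof
        assume "w = x"
        then have "card {x,w} = 1" by simp
        then show False using w sg by auto
      qed
      have "fanI E \<phi> q x (F @ [w])"
        unfolding fanI_def
      proof (intro conjI allI impI)
        show "\<exists>c. \<phi> {x, (F @ [w]) ! i} = Some c \<and> c \<in> missing E \<phi> q ((F @ [w]) ! (i - 1))"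
          if "0 < i \<and> i < length (F @ [w])" for i
        proof (cases "i < length F")
          case True
          then show ?thesis using Suc.prems(2) that by (auto simp: fanI_def nth_append)
        next
          case False
          then have "i = length F" using that by simp
          moreover have "F \<noteq> []" using Suc.prems(2) by (simp add: fanI_def)
          ultimately show ?thesis using w \<eta>0
            by (auto simp: nth_append z_def last_conv_nth)
        qed
      qed (use Suc.prems(2) False wx w in \<open>auto simp: fanI_def\<close>)
      from Suc.IH[OF eq this] show ?thesis
        using Suc.prems(2) by (auto simp: fanI_def nth_append)
    qed
  qed
qed

lemma make_fan_props:
  assumes "make_fan E \<phi> q e x C = Some (F, \<eta>, j)"
    and sg: "\<forall>f\<in>E. card f = 2" and e: "e \<in> E" "x \<in> e"
  shows "fanI E \<phi> q x F \<and> e = {x, F ! 0} \<and> \<eta> \<in> missing E \<phi> q (last F) \<and> \<eta> \<in> C \<and>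
    ((j = length F \<and> \<not>(\<exists>w. {x,w} \<in> E \<and> \<phi> {x,w} = Some \<eta>)) \<or>
     (j < length F \<and> \<phi> {x, F!j} = Some \<eta>))"
proof -
  have "card e = 2" using sg e by auto
  then obtain a b where ab: "e = {a,b}" "a \<noteq> b" by (auto simp: card_Suc_eq numeral_2_eq_2)
  obtain y where y: "e = {x,y}" "y \<noteq> x" using ab e(2) by auto
  have te: "the_elem (e - {x}) = y" using y by auto
  have f0: "fanI E \<phi> q x [y]" using y e by (auto simp: fanI_def insert_commute)
  show ?thesis
    using fan_loop_props[OF assms(1)[unfolded make_fan_def te] f0 sg] y by auto
qed


lemma doubleton_x: "a \<noteq> x \<Longrightarrow> {x,a} = {x,b} \<Longrightarrow> a = b"
  by (metis doubleton_eq_iff)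

lemma shift_other:
  "(\<forall>y\<in>set ys. f \<noteq> {x,y}) \<Longrightarrow> shift_fan \<phi> x ys f = \<phi> f"
  by (induction \<phi> x ys rule: shift_fan.induct) auto

lemma shift_last:
  "ys \<noteq> [] \<Longrightarrow> distinct ys \<Longrightarrow> x \<notin> set ys \<Longrightarrow> shift_fan \<phi> x ys {x, last ys} = None"
proof (induction \<phi> x ys rule: shift_fan.induct)
  case (3 \<phi> x y z ys)
  have "last (z#ys) \<noteq> y" using 3(3) by (metis distinct.simps(2) last_in_set list.distinct(1))
  moreover have "y \<noteq> x" using 3 by auto
  ultimately have "{x, last (z#ys)} \<noteq> {x,y}" by (metis doubleton_x)
  then show ?case using 3 by auto
qed auto

lemma shift_mid:
  "Suc i < length ys \<Longrightarrow> distinct ys \<Longrightarrow> x \<notin> set ys \<Longrightarrow>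
   shift_fan \<phi> x ys {x, ys!i} = \<phi> {x, ys ! Suc i}"
proof (induction \<phi> x ys arbitrary: i rule: shift_fan.induct)
  case (3 \<phi> x y z ys)
  show ?case
  proof (cases i)
    case 0 then show ?thesis by simp
  next
    case (Suc i')
    have m: "(z#ys) ! i' \<in> set (z#ys)" using 3(2) Suc by (intro nth_mem) simp
    then have "(z#ys) ! i' \<noteq> y" using 3(3) by auto
    moreover have "(z#ys) ! i' \<noteq> x" using 3(4) m by auto
    ultimately have "{x, (z#ys)!i'} \<noteq> {x,y}" by (metis doubleton_x)
    then show ?thesis using 3 Suc by auto
  qed
qed auto

lemma shift_cases:
  assumes "(shift_fan \<phi> x ys) f = Some c" "distinct ys" "x \<notin> set ys"
  shows "((\<forall>y\<in>set ys. f \<noteq> {x,y}) \<and> \<phi> f = Some c) \<or>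
         (\<exists>i. Suc i < length ys \<and> f = {x, ys!i} \<and> \<phi> {x, ys ! Suc i} = Some c)"
proof (cases "\<forall>y\<in>set ys. f \<noteq> {x,y}")
  case True then have "shift_fan \<phi> x ys f = \<phi> f" by (rule shift_other)
  then show ?thesis using True assms(1) by simp
next
  case False
  then obtain i where i: "i < length ys" "f = {x, ys!i}" by (auto simp: in_set_conv_nth)
  show ?thesis
  proof (cases "Suc i < length ys")
    case True then have "shift_fan \<phi> x ys f = \<phi> {x, ys ! Suc i}" using i assms(2,3) shift_mid by simp
    then show ?thesis using True i assms(1) by auto
  next
    case False
    then have "i = length ys - 1" using i by simp
    moreover have "ys \<noteq> []" using i by auto
    ultimately have "ys!i = last ys" by (simp add: last_conv_nth)
    moreover have "ys \<noteq> []" using i by auto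
    ultimately have "shift_fan \<phi> x ys f = None" using assms(2,3) shift_last i by simp
    then show ?thesis using assms(1) by simp
  qed
qed

lemma shift_proper:
  assumes ne: "ys \<noteq> []" and d: "distinct ys" and x: "x \<notin> set ys" and pr: "proper \<phi>"
    and hc: "\<forall>i. 0 < i \<and> i < length ys \<longrightarrow> (\<exists>c. \<phi> {x, ys!i} = Some c \<and> cfree \<phi> (ys!(i-1)) c)"
    and hx: "cfree \<phi> x \<gamma>" and hl: "cfree \<phi> (last ys) \<gamma>"
  shows "proper ((shift_fan \<phi> x ys)({x, last ys} := Some \<gamma>))"
proof -
  define \<psi> where "\<psi> = (shift_fan \<phi> x ys)({x, last ys} := Some \<gamma>)"
  have cls: "\<And>f c. \<psi> f = Some c \<Longrightarrow>
     ((\<forall>y\<in>set ys. f \<noteq> {x,y}) \<and> \<phi> f = Some c) \<or>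
     (\<exists>i. Suc i < length ys \<and> f = {x, ys!i} \<and> \<phi> {x, ys ! Suc i} = Some c) \<or>
     (f = {x, last ys} \<and> c = \<gamma>)"
  proof -
    fix f c assume "\<psi> f = Some c"
    then show "?thesis f c"
      using shift_cases[of \<phi> x ys f c, OF _ d x] by (cases "f = {x, last ys}") (auto simp: \<psi>_def)
  qed
  have lastn: "last ys = ys ! (length ys - 1)" using ne by (simp add: last_conv_nth)
  have yx: "\<And>i. i < length ys \<Longrightarrow> ys ! i \<noteq> x" using x by (auto simp: in_set_conv_nth)
  { fix u w1 w2 c
    assume a1: "\<psi> {u,w1} = Some c" and a2: "\<psi> {u,w2} = Some c"
    have nm: False if n1: "\<forall>y\<in>set ys. {u,w1} \<noteq> {x,y}" "\<phi> {u,w1} = Some c"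
       and m2: "Suc i < length ys" "{u,w2} = {x, ys!i}" "\<phi> {x, ys ! Suc i} = Some c" for i w1 w2
    proof (cases "u = x")
      case True
      then have "w1 = ys ! Suc i" using n1(2) m2(3) pr by (metis properD)
      moreover have "ys ! Suc i \<in> set ys" using m2(1) by simp
      ultimately show False using n1(1) True by blast
    next
      case False
      then have "u = ys ! i" using m2(2) by (metis doubleton_eq_iff)
      moreover obtain c' where "\<phi> {x, ys ! Suc i} = Some c'" "cfree \<phi> (ys ! i) c'"
        using hc[rule_format, of "Suc i"] m2(1) by auto
      ultimately show False using n1(2) m2(3) by (metis freeD option.inject)
    qed
    have nl: False if n1: "\<forall>y\<in>set ys. {u,w1} \<noteq> {x,y}" "\<phi> {u,w1} = Some \<gamma>"
       and l2: "{u,w2} = {x, last ys}" for w1 w2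
    proof (cases "u = x")
      case True then show False using hx n1(2) by (metis freeD)
    next
      case False
      then have "u = last ys" using l2 by (metis doubleton_eq_iff)
      then show False using hl n1(2) by (metis freeD)
    qed
    have ml: False if m1: "Suc i < length ys" "{u,w1} = {x, ys!i}" "\<phi> {x, ys ! Suc i} = Some \<gamma>"
       and l2: "{u,w2} = {x, last ys}" for i w1 w2
    proof (cases "u = x")
      case True then show False using hx m1(3) by (metis freeD)
    next
      case False
      then have "u = ys ! i" "u = last ys" using m1(2) l2 by (metis doubleton_eq_iff)+
      then have "i = length ys - 1" using d m1(1) lastn by (simp add: nth_eq_iff_index_eq)
      then show False using m1(1) by simp
    qed
    have mm: "w1 = w2" if m1: "Suc i < length ys" "{u,w1} = {x, ys!i}" "\<phi> {x, ys ! Suc i} = Some c"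
       and m2: "Suc j < length ys" "{u,w2} = {x, ys!j}" "\<phi> {x, ys ! Suc j} = Some c" for i j
    proof -
      have "ys ! Suc i = ys ! Suc j" using m1(3) m2(3) pr by (metis properD)
      then have "i = j" using d m1(1) m2(1) by (simp add: nth_eq_iff_index_eq)
      then show ?thesis using m1(2) m2(2) by (metis doubleton_same)
    qed
    have "w1 = w2"
    proof -
      from cls[OF a1] consider (N1) "\<forall>y\<in>set ys. {u,w1} \<noteq> {x,y}" "\<phi> {u,w1} = Some c"
        | (M1) i where "Suc i < length ys" "{u,w1} = {x, ys!i}" "\<phi> {x, ys ! Suc i} = Some c"
        | (L1) "{u,w1} = {x, last ys}" "c = \<gamma>" by blast
      then show ?thesis
      proof cases
        case N1
        from cls[OF a2] consider (N2) "\<forall>y\<in>set ys. {u,w2} \<noteq> {x,y}" "\<phi> {u,w2} = Some c"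
          | (M2) j where "Suc j < length ys" "{u,w2} = {x, ys!j}" "\<phi> {x, ys ! Suc j} = Some c"
          | (L2) "{u,w2} = {x, last ys}" "c = \<gamma>" by blast
        then show ?thesis
        proof cases
          case N2 then show ?thesis using N1 pr properD by metis
        next
          case (M2 j) then show ?thesis using N1 nm by blast
        next
          case L2 then show ?thesis using N1 nl by blast
        qed
      next
        case (M1 i)
        from cls[OF a2] consider (N2) "\<forall>y\<in>set ys. {u,w2} \<noteq> {x,y}" "\<phi> {u,w2} = Some c"
          | (M2) j where "Suc j < length ys" "{u,w2} = {x, ys!j}" "\<phi> {x, ys ! Suc j} = Some c"
          | (L2) "{u,w2} = {x, last ys}" "c = \<gamma>" by blast
        then show ?thesis
        proof cases
          case N2 then show ?thesis using M1 nm by blast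
        next
          case (M2 j) then show ?thesis using M1 mm by blast
        next
          case L2 then show ?thesis using M1 ml by blast
        qed
      next
        case L1
        from cls[OF a2] consider (N2) "\<forall>y\<in>set ys. {u,w2} \<noteq> {x,y}" "\<phi> {u,w2} = Some c"
          | (M2) j where "Suc j < length ys" "{u,w2} = {x, ys!j}" "\<phi> {x, ys ! Suc j} = Some c"
          | (L2) "{u,w2} = {x, last ys}" "c = \<gamma>" by blast
        then show ?thesis
        proof cases
          case N2 then show ?thesis using L1 nl by blast
        next
          case (M2 j) then show ?thesis using L1 ml by blast
        next
          case L2 then show ?thesis using L1 doubleton_same by metis
        qed
      qed
    qed
  }
  then have "proper \<psi>" unfolding proper_def by blast
  then show ?thesis unfolding \<psi>_def .
qed


definition pedges :: "'a list \<Rightarrow> 'a set set" where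
  "pedges P = {{P!t, P!Suc t} | t. Suc t < length P}"

lemma pedges_Cons2: "pedges (u # w # rest) = insert {u,w} (pedges (w # rest))"
proof (rule set_eqI)
  fix f
  show "f \<in> pedges (u # w # rest) \<longleftrightarrow> f \<in> insert {u,w} (pedges (w # rest))"
  proof
    assume "f \<in> pedges (u # w # rest)"
    then obtain t where t: "Suc t < length (u#w#rest)" "f = {(u#w#rest)!t, (u#w#rest)!Suc t}"
      unfolding pedges_def by blast
    show "f \<in> insert {u,w} (pedges (w # rest))"
    proof (cases t)
      case 0 then show ?thesis using t by simp
    next
      case (Suc t')
      then have "Suc t' < length (w#rest)" "f = {(w#rest)!t', (w#rest)!Suc t'}" using t by auto
      then show ?thesis unfolding pedges_def by blast
    qed
  next
    assume "f \<in> insert {u,w} (pedges (w # rest))"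
    then consider "f = {u,w}" | t where "Suc t < length (w#rest)" "f = {(w#rest)!t, (w#rest)!Suc t}"
      unfolding pedges_def by blast
    then show "f \<in> pedges (u # w # rest)"
    proof cases
      case 1
      then have "f = {(u#w#rest)!0, (u#w#rest)!Suc 0}" by simp
      then show ?thesis unfolding pedges_def by force
    next
      case (2 t)
      then have "Suc (Suc t) < length (u#w#rest)" "f = {(u#w#rest)!Suc t, (u#w#rest)!Suc (Suc t)}" by auto
      then show ?thesis unfolding pedges_def by blast
    qed
  qed
qed

lemma pedges_short: "length P \<le> 1 \<Longrightarrow> pedges P = {}"
  unfolding pedges_def by auto

lemma flip_char:
  "flip_path \<phi> \<alpha> \<beta> P f = (if f \<in> pedges P then swap_col \<alpha> \<beta> (\<phi> f) else \<phi> f)"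
proof (induction \<phi> \<alpha> \<beta> P rule: flip_path.induct)
  case (1 \<phi> \<alpha> \<beta> u w rest)
  then show ?case by (simp add: pedges_Cons2)
qed (simp_all add: pedges_short)

lemma swap_None[simp]: "swap_col \<alpha> \<beta> None = None"
  by (simp add: swap_col_def)

lemma swap_other: "c \<noteq> \<alpha> \<Longrightarrow> c \<noteq> \<beta> \<Longrightarrow> swap_col \<alpha> \<beta> (Some c) = Some c"
  by (simp add: swap_col_def)

lemma swap_inv: "\<alpha> \<noteq> \<beta> \<Longrightarrow> swap_col \<alpha> \<beta> (swap_col \<alpha> \<beta> x) = x"
  by (cases x) (auto simp: swap_col_def)

lemma swap_inj: "\<alpha> \<noteq> \<beta> \<Longrightarrow> swap_col \<alpha> \<beta> x = swap_col \<alpha> \<beta> y \<Longrightarrow> x = y"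
  by (metis swap_inv)

lemma swap_col_t: "swap_col \<alpha> \<beta> (Some (pcol \<alpha> \<beta> t)) = Some (pcol \<alpha> \<beta> (Suc t))"
  by (simp add: swap_col_def pcol_def)

lemma flip_cases: "flip_path \<phi> \<alpha> \<beta> P f = \<phi> f \<or> flip_path \<phi> \<alpha> \<beta> P f = swap_col \<alpha> \<beta> (\<phi> f)"
  by (simp add: flip_char)

lemma flip_other_iff: "c \<noteq> \<alpha> \<Longrightarrow> c \<noteq> \<beta> \<Longrightarrow>
   flip_path \<phi> \<alpha> \<beta> P f = Some c \<longleftrightarrow> \<phi> f = Some c"
  by (cases "\<phi> f") (auto simp: flip_char swap_col_def)

lemma flip_None_iff: "flip_path \<phi> \<alpha> \<beta> P f = None \<longleftrightarrow> \<phi> f = None"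
  by (cases "\<phi> f") (auto simp: flip_char swap_col_def)

lemma col_other: "c = \<alpha> \<or> c = \<beta> \<Longrightarrow> c \<noteq> pcol \<alpha> \<beta> t \<Longrightarrow> c = pcol \<alpha> \<beta> (Suc t)"
  by (auto simp: pcol_def)

lemma flip_key:
  assumes pr: "proper \<phi>" and a: "altp \<phi> \<alpha> \<beta> P" and fx: "cfree \<phi> (P!0) \<beta>"
    and fe: "length P > 1 \<Longrightarrow> cfree \<phi> (last P) (pcol \<alpha> \<beta> (length P - 1))"
    and t: "Suc t < length P" and f1: "{u,w1} = {P!t, P!Suc t}"
    and c2: "\<phi> {u,w2} = Some c2" "c2 = \<alpha> \<or> c2 = \<beta>" "c2 \<noteq> pcol \<alpha> \<beta> t"
  shows "{u,w2} \<in> pedges P"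
proof -
  have ae: "\<And>t. Suc t < length P \<Longrightarrow> \<phi> {P!t, P!Suc t} = Some (pcol \<alpha> \<beta> t)"
    using a by (simp add: altp_def)
  have cc: "c2 = pcol \<alpha> \<beta> (Suc t)" using col_other c2(2,3) by blast
  show ?thesis
  proof (cases "u = P!t")
    case True
    show ?thesis
    proof (cases t)
      case 0
      then have "c2 = \<beta>" using cc by (simp add: pcol_def)
      then show ?thesis using fx True 0 c2(1) freeD by metis
    next
      case (Suc t')
      have "\<phi> {P!t', P!t} = Some c2" using ae[of t'] Suc t cc by simp
      then have "w2 = P!t'" using c2(1) True pr properD' by metis
      then have "{u,w2} = {P!t', P!Suc t'}" using True Suc by (simp add: insert_commute)
      moreover have "Suc t' < length P" using t Suc by simp
      ultimately show ?thesis unfolding pedges_def by blast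
    qed
  next
    case False
    then have u: "u = P!Suc t" using f1 by (metis doubleton_eq_iff)
    show ?thesis
    proof (cases "Suc (Suc t) < length P")
      case True
      have "\<phi> {P!Suc t, P!Suc (Suc t)} = Some c2" using ae[OF True] cc by simp
      then have "w2 = P!Suc (Suc t)" using c2(1) u pr properD by metis
      then show ?thesis using u True unfolding pedges_def by blast
    next
      case False
      then have st: "Suc t = length P - 1" using t by simp
      have "P \<noteq> []" using t by auto
      then have "last P = P!Suc t" using st by (simp add: last_conv_nth)
      note this st
      moreover have "length P > 1" using t by simp
      ultimately have "cfree \<phi> (P!Suc t) c2" using fe cc by metis
      then show ?thesis using u c2(1) freeD by metis
    qed
  qed
qed

lemma flip_proper:
  assumes pr: "proper \<phi>" and ab: "\<alpha> \<noteq> \<beta>" and a: "altp \<phi> \<alpha> \<beta> P" and fx: "cfree \<phi> (P!0) \<beta>"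
    and fe: "length P > 1 \<Longrightarrow> cfree \<phi> (last P) (pcol \<alpha> \<beta> (length P - 1))"
  shows "proper (flip_path \<phi> \<alpha> \<beta> P)"
proof -
  define \<psi> where "\<psi> = flip_path \<phi> \<alpha> \<beta> P"
  have ae: "\<And>t. Suc t < length P \<Longrightarrow> \<phi> {P!t, P!Suc t} = Some (pcol \<alpha> \<beta> t)"
    using a by (simp add: altp_def)
  have mixed: False if p1: "{u,w1} \<in> pedges P" and p2: "{u,w2} \<notin> pedges P"
      and s1: "\<psi> {u,w1} = Some c" and s2: "\<psi> {u,w2} = Some c" for u w1 w2 c
  proof -
    obtain t where t: "Suc t < length P" "{u,w1} = {P!t, P!Suc t}" using p1 unfolding pedges_def by blast
    have "\<phi> {u,w1} = Some (pcol \<alpha> \<beta> t)" using ae[OF t(1)] t(2) by simp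
    then have "c = pcol \<alpha> \<beta> (Suc t)" using s1 p1 swap_col_t by (simp add: \<psi>_def flip_char)
    moreover have "\<phi> {u,w2} = Some c" using s2 p2 by (simp add: \<psi>_def flip_char)
    ultimately have "{u,w2} \<in> pedges P"
      using flip_key[OF pr a fx fe t(1) t(2), of w2 c] ab col_in col_neq_Suc by metis
    then show False using p2 by simp
  qed
  { fix u w1 w2 c
    assume s1: "\<psi> {u,w1} = Some c" and s2: "\<psi> {u,w2} = Some c"
    have "w1 = w2"
    proof (cases "{u,w1} \<in> pedges P \<longleftrightarrow> {u,w2} \<in> pedges P")
      case True
      then have "\<phi> {u,w1} = \<phi> {u,w2}" using s1 s2 swap_inj[OF ab]
        by (auto simp: \<psi>_def flip_char split: if_splits)
      moreover obtain c' where "\<phi> {u,w1} = Some c'"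
        using s1 by (cases "\<phi> {u,w1}") (auto simp: \<psi>_def flip_char split: if_splits)
      ultimately show ?thesis using pr properD by metis
    next
      case False
      then show ?thesis using mixed s1 s2 by blast
    qed }
  then show ?thesis unfolding proper_def \<psi>_def by blast
qed


definition inv_ok :: "'a set set \<Rightarrow> 'a set set \<Rightarrow> 'a coloring \<Rightarrow> bool" where
  "inv_ok E U \<phi> \<longleftrightarrow> proper \<phi> \<and> supp_ok E \<phi> \<and> U \<subseteq> E \<and> (\<forall>f\<in>U. \<phi> f = None)"

lemma proper_uncolor: "proper \<phi> \<Longrightarrow> proper (\<phi>(f := None))"
  unfolding proper_def by (auto split: if_splits)

lemma shift_all:
  assumes ne: "ys \<noteq> []" and d: "distinct ys" and x: "x \<notin> set ys" and pr: "proper \<phi>"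
    and sp: "supp_ok E \<phi>" and ed: "\<forall>y\<in>set ys. {x,y} \<in> E"
    and hc: "\<forall>i. 0 < i \<and> i < length ys \<longrightarrow> (\<exists>c. \<phi> {x, ys!i} = Some c \<and> cfree \<phi> (ys!(i-1)) c)"
    and hx: "cfree \<phi> x \<gamma>" and hl: "cfree \<phi> (last ys) \<gamma>"
    and e: "e = {x, ys!0}" and UE: "U \<subseteq> E" and Un: "\<forall>f\<in>U-{e}. \<phi> f = None"
  shows "inv_ok E (U - {e}) ((shift_fan \<phi> x ys)({x, last ys} := Some \<gamma>))"
proof -
  define \<psi> where "\<psi> = (shift_fan \<phi> x ys)({x, last ys} := Some \<gamma>)"
  have p: "proper \<psi>" unfolding \<psi>_def by (rule shift_proper[OF ne d x pr hc hx hl])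
  have s: "supp_ok E \<psi>" unfolding supp_ok_def
  proof (intro allI impI)
    fix f assume a: "\<psi> f \<noteq> None"
    show "f \<in> E"
    proof (cases "f = {x, last ys}")
      case True then show ?thesis using ed ne by simp
    next
      case False
      then obtain c where "shift_fan \<phi> x ys f = Some c" using a by (auto simp: \<psi>_def)
      from shift_cases[OF this d x] show ?thesis
      proof
        assume "(\<forall>y\<in>set ys. f \<noteq> {x,y}) \<and> \<phi> f = Some c"
        then show ?thesis using sp by (auto simp: supp_ok_def)
      next
        assume "\<exists>i. Suc i < length ys \<and> f = {x, ys!i} \<and> \<phi> {x, ys ! Suc i} = Some c"
        then obtain i where "Suc i < length ys" "f = {x, ys!i}" by blast
        then show ?thesis using ed by simp
      qed
    qed
  qed
  have u: "\<forall>f\<in>U-{e}. \<psi> f = None"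
  proof
    fix f assume f: "f \<in> U - {e}"
    have nf: "\<forall>y\<in>set ys. f \<noteq> {x,y}"
    proof
      fix y assume "y \<in> set ys"
      then obtain i where i: "i < length ys" "ys!i = y" by (auto simp: in_set_conv_nth)
      show "f \<noteq> {x,y}"
      proof (cases i)
        case 0 then show ?thesis using f e i by auto
      next
        case (Suc i')
        then obtain c where "\<phi> {x, ys!i} = Some c" using hc[rule_format, of i] i by auto
        moreover have "\<phi> f = None" using Un f by blast
        ultimately show ?thesis using i by auto
      qed
    qed
    then have "f \<noteq> {x, last ys}" using ne by simp
    then show "\<psi> f = None" using nf shift_other[OF nf] Un f by (simp add: \<psi>_def)
  qed
  show ?thesis using p s u UE unfolding inv_ok_def \<psi>_def by blast
qed

lemma interior_alpha:
  assumes a: "altp \<phi> \<alpha> \<beta> P" and t: "1 \<le> t" "Suc t < length P" and fz: "cfree \<phi> (P!t) \<alpha>"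
  shows False
proof -
  obtain t' where t': "t = Suc t'" using t by (cases t) auto
  have e1: "\<phi> {P!t', P!t} = Some (pcol \<alpha> \<beta> t')" using a t t' by (simp add: altp_def)
  have e2: "\<phi> {P!t, P!Suc t} = Some (pcol \<alpha> \<beta> t)" using a t by (simp add: altp_def)
  have "pcol \<alpha> \<beta> t' = \<alpha> \<or> pcol \<alpha> \<beta> t = \<alpha>" using t' by (simp add: pcol_def)
  then show False using e1 e2 fz freeD freeD' by metis
qed


lemma pedge_mem: "{u,w} \<in> pedges P \<Longrightarrow> u \<in> set P"
  unfolding pedges_def by (auto simp: doubleton_eq_iff)

lemma fanI_hc:
  assumes "fanI E \<phi> q x F" "supp_ok E \<phi>" "0 < i" "i < length F"
  obtains c where "\<phi> {x, F!i} = Some c" "cfree \<phi> (F!(i-1)) c"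
proof -
  have "\<exists>c. \<phi> {x, F!i} = Some c \<and> c \<in> missing E \<phi> q (F!(i-1))"
    using assms(1,3,4) unfolding fanI_def by blast
  then obtain c where "\<phi> {x, F!i} = Some c" "c \<in> missing E \<phi> q (F!(i-1))" by blast
  then show ?thesis using that missing_free[OF assms(2)] by blast
qed

lemma branchB:
  assumes fI: "fanI E \<phi> q x F" and pr: "proper \<phi>" and sp: "supp_ok E \<phi>"
    and j: "0 < j" "j < length F" and xj: "\<phi> {x, F!j} = Some \<alpha>"
    and fx: "cfree \<phi> x \<beta>" and ab: "\<alpha> \<noteq> \<beta>"
    and e: "e = {x, F!0}" and UE: "U \<subseteq> E"
    and pr1: "proper \<phi>1" and sub: "\<forall>f c. \<phi>1 f = Some c \<longrightarrow> \<phi> f = Some c"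
    and Un1: "\<forall>f\<in>U. \<phi>1 f = None"
    and pa: "P' \<noteq> []" "P'!0 = x" "altp \<phi>1 \<alpha> \<beta> P'"
    and fe1: "length P' > 1 \<Longrightarrow> cfree \<phi>1 (last P') (pcol \<alpha> \<beta> (length P' - 1))"
    and notin: "F!(j-1) \<notin> set P'"
    and xedge: "\<forall>w. \<phi>1 {x,w} = Some \<alpha> \<longrightarrow> {x,w} \<in> pedges P'"
    and kept: "\<forall>i. 0 < i \<and> i < j \<longrightarrow> \<phi>1 {x, F!i} = \<phi> {x, F!i}"
  shows "inv_ok E (U - {e}) ((shift_fan (flip_path \<phi>1 \<alpha> \<beta> P') x (take j F))({x, F!(j-1)} := Some \<alpha>))"
proof -
  define \<phi>2 where "\<phi>2 = flip_path \<phi>1 \<alpha> \<beta> P'"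
  define ys where "ys = take j F"
  have dF: "distinct F" and xF: "x \<notin> set F" and eF: "\<forall>y\<in>set F. {x,y} \<in> E"
    using fI by (auto simp: fanI_def)
  have sp1: "supp_ok E \<phi>1" unfolding supp_ok_def
  proof (intro allI impI)
    fix f assume "\<phi>1 f \<noteq> None"
    then obtain c where "\<phi>1 f = Some c" by auto
    then have "\<phi> f = Some c" using sub by blast
    then show "f \<in> E" using sp by (auto simp: supp_ok_def)
  qed
  have fx1: "cfree \<phi>1 (P'!0) \<beta>" unfolding cfree_def
  proof (intro allI notI)
    fix y assume "\<phi>1 {P'!0, y} = Some \<beta>"
    then have "\<phi> {x, y} = Some \<beta>" using sub pa(2) by auto
    then show False using freeD[OF fx] by blast
  qed
  have pr2: "proper \<phi>2" unfolding \<phi>2_def by (rule flip_proper[OF pr1 ab pa(3) fx1 fe1])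
  have sp2: "supp_ok E \<phi>2" using sp1 unfolding supp_ok_def \<phi>2_def by (simp add: flip_None_iff)
  have sub2: "\<And>f c. c \<noteq> \<alpha> \<Longrightarrow> c \<noteq> \<beta> \<Longrightarrow> \<phi>2 f = Some c \<longleftrightarrow> \<phi>1 f = Some c"
    unfolding \<phi>2_def by (rule flip_other_iff)
  have fjm: "cfree \<phi> (F!(j-1)) \<alpha>"
  proof -
    obtain c where "\<phi> {x, F!j} = Some c" "cfree \<phi> (F!(j-1)) c" using fanI_hc[OF fI sp j] .
    then show ?thesis using xj by simp
  qed
  have ne: "ys \<noteq> []" using j by (auto simp: ys_def)
  have lys: "last ys = F!(j-1)"
  proof -
    have "last ys = ys ! (length ys - 1)" using ne by (simp add: last_conv_nth)
    moreover have "length ys = j" using j by (simp add: ys_def)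
    ultimately show ?thesis using j by (simp add: ys_def)
  qed
  have hc2: "\<forall>i. 0 < i \<and> i < length ys \<longrightarrow> (\<exists>c. \<phi>2 {x, ys!i} = Some c \<and> cfree \<phi>2 (ys!(i-1)) c)"
  proof (intro allI impI)
    fix i assume i: "0 < i \<and> i < length ys"
    then have ij: "i < j" "ys!i = F!i" "ys!(i-1) = F!(i-1)" using j by (auto simp: ys_def)
    have iF: "0 < i" "i < length F" using i ij j by auto
    obtain c where c: "\<phi> {x, F!i} = Some c" "cfree \<phi> (F!(i-1)) c"
      by (rule fanI_hc[OF fI sp iF])
    have ca: "c \<noteq> \<alpha>"
    proof
      assume "c = \<alpha>"
      then have "F!i = F!j" using properD[OF pr _ xj] c(1) by blast
      then show False using dF ij j by (simp add: nth_eq_iff_index_eq)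
    qed
    have cb: "c \<noteq> \<beta>" using c(1) freeD[OF fx] by blast
    have "\<phi>1 {x, F!i} = Some c" using kept i ij c(1) by simp
    then have "\<phi>2 {x, F!i} = Some c" using sub2 ca cb by simp
    moreover have "cfree \<phi>2 (F!(i-1)) c"
      unfolding cfree_def
    proof (intro allI notI)
      fix y assume "\<phi>2 {F!(i-1), y} = Some c"
      then have "\<phi>1 {F!(i-1), y} = Some c" using sub2 ca cb by simp
      then have "\<phi> {F!(i-1), y} = Some c" using sub by blast
      then show False using freeD[OF c(2)] by blast
    qed
    ultimately show "\<exists>c. \<phi>2 {x, ys!i} = Some c \<and> cfree \<phi>2 (ys!(i-1)) c" using ij by auto
  qed
  have hx2: "cfree \<phi>2 x \<alpha>"
    unfolding cfree_def
  proof (intro allI notI)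
    fix w assume w: "\<phi>2 {x,w} = Some \<alpha>"
    show False
    proof (cases "{x,w} \<in> pedges P'")
      case True
      then have "swap_col \<alpha> \<beta> (\<phi>1 {x,w}) = Some \<alpha>" using w by (simp add: \<phi>2_def flip_char)
      then have "\<phi>1 {x,w} = Some \<beta>" using ab by (cases "\<phi>1 {x,w}") (auto simp: swap_col_def split: if_splits)
      then have "\<phi> {x,w} = Some \<beta>" using sub by blast
      then show False using freeD[OF fx] by blast
    next
      case False
      then have "\<phi>1 {x,w} = Some \<alpha>" using w by (simp add: \<phi>2_def flip_char)
      then show False using xedge False by blast
    qed
  qed
  have hl2: "cfree \<phi>2 (last ys) \<alpha>"
    unfolding cfree_def lys
  proof (intro allI notI)
    fix w assume w: "\<phi>2 {F!(j-1),w} = Some \<alpha>"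
    have "{F!(j-1),w} \<notin> pedges P'" using notin pedge_mem[of "F!(j-1)" w P'] by blast
    then have "\<phi>1 {F!(j-1),w} = Some \<alpha>" using w by (simp add: \<phi>2_def flip_char)
    then have "\<phi> {F!(j-1),w} = Some \<alpha>" using sub by blast
    then show False using freeD[OF fjm] by blast
  qed
  have dys: "distinct ys" using dF by (simp add: ys_def)
  have xys: "x \<notin> set ys" using xF by (auto simp: ys_def dest: in_set_takeD)
  have eys: "\<forall>y\<in>set ys. {x,y} \<in> E" using eF by (auto simp: ys_def dest: in_set_takeD)
  have e': "e = {x, ys!0}" using e j by (simp add: ys_def)
  have Un2: "\<forall>f\<in>U-{e}. \<phi>2 f = None" using Un1 by (simp add: \<phi>2_def flip_None_iff)
  have "inv_ok E (U - {e}) ((shift_fan \<phi>2 x ys)({x, last ys} := Some \<alpha>))"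
    by (rule shift_all[OF ne dys xys pr2 sp2 eys hc2 hx2 hl2 e' UE Un2])
  then have "inv_ok E (U - {e}) ((shift_fan \<phi>2 x ys)({x, F!(j-1)} := Some \<alpha>))" by (simp only: lys)
  then show ?thesis unfolding \<phi>2_def ys_def .
qed


lemma branchA:
  assumes fI: "fanI E \<phi> q x F" and pr: "proper \<phi>" and sp: "supp_ok E \<phi>"
    and j: "0 < j" "j < length F" and xj: "\<phi> {x, F!j} = Some \<alpha>"
    and fx: "cfree \<phi> x \<beta>" and ab: "\<alpha> \<noteq> \<beta>"
    and e: "e = {x, F!0}" and UE: "U \<subseteq> E" and Un: "\<forall>f\<in>U. \<phi> f = None"
    and pa: "P \<noteq> []" "P!0 = x" "altp \<phi> \<alpha> \<beta> P" "length P > 1" "P!1 = F!j"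
    and fe: "cfree \<phi> (last P) (pcol \<alpha> \<beta> (length P - 1))"
    and lastP: "last P = F!(j-1)"
    and fl: "cfree \<phi> (last F) \<alpha>"
  shows "inv_ok E (U - {e}) ((shift_fan (flip_path \<phi> \<alpha> \<beta> P) x F)({x, last F} := Some \<alpha>))"
proof -
  define \<phi>2 where "\<phi>2 = flip_path \<phi> \<alpha> \<beta> P"
  have dF: "distinct F" and xF: "x \<notin> set F" and eF: "\<forall>y\<in>set F. {x,y} \<in> E" and neF: "F \<noteq> []"
    using fI by (auto simp: fanI_def)
  have fx0: "cfree \<phi> (P!0) \<beta>" using fx pa(2) by simp
  have pr2: "proper \<phi>2" unfolding \<phi>2_def by (rule flip_proper[OF pr ab pa(3) fx0 fe])
  have sp2: "supp_ok E \<phi>2" using sp unfolding supp_ok_def \<phi>2_def by (simp add: flip_None_iff)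
  have sub2: "\<And>f c. c \<noteq> \<alpha> \<Longrightarrow> c \<noteq> \<beta> \<Longrightarrow> \<phi>2 f = Some c \<longleftrightarrow> \<phi> f = Some c"
    unfolding \<phi>2_def by (rule flip_other_iff)
  have ae: "\<And>t. Suc t < length P \<Longrightarrow> \<phi> {P!t, P!Suc t} = Some (pcol \<alpha> \<beta> t)"
    using pa(3) by (simp add: altp_def)
  have fjm: "cfree \<phi> (F!(j-1)) \<alpha>"
  proof -
    obtain c where "\<phi> {x, F!j} = Some c" "cfree \<phi> (F!(j-1)) c" using fanI_hc[OF fI sp j] .
    then show ?thesis using xj by simp
  qed
  have p01: "{x, F!j} \<in> pedges P"
  proof -
    have "{x, F!j} = {P!0, P!Suc 0}" using pa by simp
    moreover have "Suc 0 < length P" using pa(4) by simp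
    ultimately show ?thesis unfolding pedges_def by blast
  qed
  have hc2: "\<forall>i. 0 < i \<and> i < length F \<longrightarrow> (\<exists>c. \<phi>2 {x, F!i} = Some c \<and> cfree \<phi>2 (F!(i-1)) c)"
  proof (intro allI impI)
    fix i assume i: "0 < i \<and> i < length F"
    then have iF: "0 < i" "i < length F" by auto
    show "\<exists>c. \<phi>2 {x, F!i} = Some c \<and> cfree \<phi>2 (F!(i-1)) c"
    proof (cases "i = j")
      case False
      obtain c where c: "\<phi> {x, F!i} = Some c" "cfree \<phi> (F!(i-1)) c"
        by (rule fanI_hc[OF fI sp iF])
      have ca: "c \<noteq> \<alpha>"
      proof
        assume "c = \<alpha>"
        then have "F!i = F!j" using properD[OF pr _ xj] c(1) by blast
        then show False using dF iF j False by (simp add: nth_eq_iff_index_eq)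
      qed
      have cb: "c \<noteq> \<beta>" using c(1) freeD[OF fx] by blast
      have "\<phi>2 {x, F!i} = Some c" using sub2 ca cb c(1) by simp
      moreover have "cfree \<phi>2 (F!(i-1)) c"
        unfolding cfree_def
      proof (intro allI notI)
        fix y assume "\<phi>2 {F!(i-1), y} = Some c"
        then have "\<phi> {F!(i-1), y} = Some c" using sub2 ca cb by simp
        then show False using freeD[OF c(2)] by blast
      qed
      ultimately show ?thesis by blast
    next
      case True
      have "\<phi>2 {x, F!j} = Some \<beta>" using p01 xj by (simp add: \<phi>2_def flip_char swap_col_def)
      moreover have "cfree \<phi>2 (F!(j-1)) \<beta>"
        unfolding cfree_def
      proof (intro allI notI)
        fix w assume w: "\<phi>2 {F!(j-1), w} = Some \<beta>"
        define s where "s = length P - 1"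
        have s: "s = Suc (s - 1)" "Suc (s-1) < length P" using pa(4) by (auto simp: s_def)
        have zs: "F!(j-1) = P!s" using lastP pa(1) by (simp add: s_def last_conv_nth)
        show False
        proof (cases "{F!(j-1), w} \<in> pedges P")
          case True
          then have "swap_col \<alpha> \<beta> (\<phi> {F!(j-1),w}) = Some \<beta>" using w by (simp add: \<phi>2_def flip_char)
          then have "\<phi> {F!(j-1),w} = Some \<alpha>" using ab
            by (cases "\<phi> {F!(j-1),w}") (auto simp: swap_col_def split: if_splits)
          then show False using freeD[OF fjm] by blast
        next
          case False
          then have w1: "\<phi> {F!(j-1),w} = Some \<beta>" using w by (simp add: \<phi>2_def flip_char)
          have e1: "\<phi> {P!(s-1), P!s} = Some (pcol \<alpha> \<beta> (s-1))" using ae[OF s(2)] s(1) by simp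
          have "pcol \<alpha> \<beta> (s-1) \<noteq> \<alpha>" using e1 zs freeD'[OF fjm] by metis
          then have "pcol \<alpha> \<beta> (s-1) = \<beta>" using col_in by metis
          then have "P!(s-1) = w" using properD'[OF pr e1[unfolded \<open>pcol \<alpha> \<beta> (s-1) = \<beta>\<close>]] w1[unfolded zs] by blast
          then have "{F!(j-1), w} = {P!(s-1), P!Suc (s-1)}" using zs s(1) by (simp add: insert_commute)
          then have "{F!(j-1), w} \<in> pedges P" using s(2) unfolding pedges_def by blast
          then show False using False by simp
        qed
      qed
      ultimately show ?thesis using True by blast
    qed
  qed
  have hx2: "cfree \<phi>2 x \<alpha>"
    unfolding cfree_def
  proof (intro allI notI)
    fix w assume w: "\<phi>2 {x,w} = Some \<alpha>"
    show False
    proof (cases "{x,w} \<in> pedges P")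
      case True
      then have "swap_col \<alpha> \<beta> (\<phi> {x,w}) = Some \<alpha>" using w by (simp add: \<phi>2_def flip_char)
      then have "\<phi> {x,w} = Some \<beta>" using ab by (cases "\<phi> {x,w}") (auto simp: swap_col_def split: if_splits)
      then show False using freeD[OF fx] by blast
    next
      case False
      then have "\<phi> {x,w} = Some \<alpha>" using w by (simp add: \<phi>2_def flip_char)
      then have "w = F!j" using properD[OF pr _ xj] by blast
      then show False using p01 False by simp
    qed
  qed
  have lF: "last F \<notin> set P"
  proof
    assume "last F \<in> set P"
    then obtain t where t: "t < length P" "P!t = last F" by (auto simp: in_set_conv_nth)
    show False
    proof (cases "t = 0")
      case True then show False using t pa(2) xF neF by auto
    next
      case False
      show False
      proof (cases "Suc t < length P")
        case True
        then show False using interior_alpha[OF pa(3), of t] False t fl by simp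
      next
        case False
        then have "t = length P - 1" using t by simp
        then have "last P = last F" using t pa(1) by (simp add: last_conv_nth)
        then have "F!(j-1) = F!(length F - 1)" using lastP neF by (simp add: last_conv_nth)
        then show False using dF j by (simp add: nth_eq_iff_index_eq)
      qed
    qed
  qed
  have hl2: "cfree \<phi>2 (last F) \<alpha>"
    unfolding cfree_def
  proof (intro allI notI)
    fix w assume w: "\<phi>2 {last F,w} = Some \<alpha>"
    have "{last F,w} \<notin> pedges P" using lF pedge_mem[of "last F" w P] by blast
    then have "\<phi> {last F,w} = Some \<alpha>" using w by (simp add: \<phi>2_def flip_char)
    then show False using freeD[OF fl] by blast
  qed
  have Un2: "\<forall>f\<in>U-{e}. \<phi>2 f = None" using Un by (simp add: \<phi>2_def flip_None_iff)
  have "inv_ok E (U - {e}) ((shift_fan \<phi>2 x F)({x, last F} := Some \<alpha>))"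
    by (rule shift_all[OF neF dF xF pr2 sp2 eF hc2 hx2 hl2 e UE Un2])
  then show ?thesis unfolding \<phi>2_def .
qed


lemma upd_nontrunc:
  assumes "(\<phi>', fl) \<in> set_pmf (stage1_update E \<phi> q l x C F P \<alpha>)"
    and "length P - 1 \<noteq> 0" "length P - 1 \<noteq> l"
  shows "let \<beta> = Min (missing E \<phi> q x \<inter> C); j = (LEAST j. F ! j = P ! 1); \<phi>2 = flip_path \<phi> \<alpha> \<beta> P in
    \<phi>' = (if last P = F ! (j - 1) then (shift_fan \<phi>2 x F)({x, last F} := Some \<alpha>)
          else (shift_fan \<phi>2 x (take j F))({x, F ! (j - 1)} := Some \<alpha>))"
  using assms by (simp add: stage1_update_def Let_def split: if_splits)

lemma upd_trunc:
  assumes "(\<phi>', fl) \<in> set_pmf (stage1_update E \<phi> q l x C F P \<alpha>)"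
    and "length P - 1 \<noteq> 0" "length P - 1 = l"
  shows "\<exists>l'\<in>{1..l}. let \<beta> = Min (missing E \<phi> q x \<inter> C); j = (LEAST j. F ! j = P ! 1);
    \<phi>1 = \<phi>({P ! (l' - 1), P ! l'} := None); P' = take l' P; \<phi>2 = flip_path \<phi>1 \<alpha> \<beta> P' in
    \<phi>' = (if last P' = F ! (j - 1) then (shift_fan \<phi>2 x F)({x, last F} := Some \<alpha>)
          else (shift_fan \<phi>2 x (take j F))({x, F ! (j - 1)} := Some \<alpha>))"
  using assms by (auto simp: stage1_update_def Let_def split: if_splits)

lemma upd_zero:
  assumes "(\<phi>', fl) \<in> set_pmf (stage1_update E \<phi> q l x C F P \<alpha>)"
    and "length P - 1 = 0"
  shows "\<phi>' = (shift_fan \<phi> x F)({x, last F} := Some \<alpha>)"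
  using assms by (simp add: stage1_update_def Let_def)

lemma vc_cases:
  assumes "vizing_chain E \<phi> q e x C l = Some ((F,P),\<alpha>)"
  obtains j where "make_fan E \<phi> q e x C = Some (F, \<alpha>, j)" "j = length F" "P = [x]"
  | j where "make_fan E \<phi> q e x C = Some (F, \<alpha>, j)" "j \<noteq> length F"
      "missing E \<phi> q x \<inter> C \<noteq> {}" "P = ab_path E \<phi> x \<alpha> (Min (missing E \<phi> q x \<inter> C)) l"
proof -
  obtain F0 \<alpha>0 j0 where mf: "make_fan E \<phi> q e x C = Some (F0, \<alpha>0, j0)"
    using assms by (cases "make_fan E \<phi> q e x C") (auto simp: vizing_chain_def)
  show ?thesis
    using assms that by (auto simp: vizing_chain_def mf split: if_splits)
qed


lemma pedgeI: "Suc t < length P \<Longrightarrow> {P!t, P!Suc t} \<in> pedges P"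
  unfolding pedges_def by blast

lemma step_inv:
  assumes sg: "\<forall>f\<in>E. card f = 2" and iv: "inv_ok E U \<phi>" and eU: "e \<in> U" and xe: "x \<in> e" and l: "1 \<le> l"
    and vc: "vizing_chain E \<phi> q e x C l = Some ((F,P),\<alpha>)"
    and up: "(\<phi>', fl) \<in> set_pmf (stage1_update E \<phi> q l x C F P \<alpha>)"
  shows "inv_ok E (U - {e}) \<phi>'"
proof -
  have pr: "proper \<phi>" and sp: "supp_ok E \<phi>" and UE: "U \<subseteq> E" and Un: "\<forall>f\<in>U. \<phi> f = None"
    using iv by (auto simp: inv_ok_def)
  have eE: "e \<in> E" using eU UE by blast
  have Un': "\<forall>f\<in>U-{e}. \<phi> f = None" using Un by blast
  show ?thesis
    using vc
  proof (cases rule: vc_cases)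
    case (1 j)
    note MF = make_fan_props[OF 1(1) sg eE xe]
    have fI: "fanI E \<phi> q x F" and e: "e = {x, F!0}" and fl: "cfree \<phi> (last F) \<alpha>"
      using MF missing_free[OF sp] by auto
    have nw: "\<not>(\<exists>w. {x,w} \<in> E \<and> \<phi> {x,w} = Some \<alpha>)" using MF 1(2) by auto
    have hx: "cfree \<phi> x \<alpha>" unfolding cfree_def
    proof (intro allI notI)
      fix y assume "\<phi> {x,y} = Some \<alpha>"
      moreover then have "{x,y} \<in> E" using sp by (auto simp: supp_ok_def)
      ultimately show False using nw by blast
    qed
    have \<phi>': "\<phi>' = (shift_fan \<phi> x F)({x, last F} := Some \<alpha>)" using upd_zero[OF up] 1(3) by simp
    have hc: "\<forall>i. 0 < i \<and> i < length F \<longrightarrow> (\<exists>c. \<phi> {x, F!i} = Some c \<and> cfree \<phi> (F!(i-1)) c)"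
    proof (intro allI impI)
      fix i assume "0 < i \<and> i < length F"
      then have "0 < i" "i < length F" by auto
      from fanI_hc[OF fI sp this] show "\<exists>c. \<phi> {x, F!i} = Some c \<and> cfree \<phi> (F!(i-1)) c" by blast
    qed
    have neF: "F \<noteq> []" "distinct F" "x \<notin> set F" "\<forall>y\<in>set F. {x,y} \<in> E" using fI by (auto simp: fanI_def)
    show ?thesis unfolding \<phi>' by (rule shift_all[OF neF(1) neF(2) neF(3) pr sp neF(4) hc hx fl e UE Un'])
  next
    case (2 j)
    note MF = make_fan_props[OF 2(1) sg eE xe]
    have fI: "fanI E \<phi> q x F" and e: "e = {x, F!0}" and fl: "cfree \<phi> (last F) \<alpha>"
      using MF missing_free[OF sp] by auto
    have jl: "j < length F" and xj: "\<phi> {x, F!j} = Some \<alpha>" using MF 2(2) by auto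
    have dF: "distinct F" and xF: "x \<notin> set F" using fI by (auto simp: fanI_def)
    have f0: "\<phi> {x, F!0} = None" using Un eU e by simp
    have j0: "0 < j" using f0 xj by (cases j) auto
    define \<beta> where "\<beta> = Min (missing E \<phi> q x \<inter> C)"
    have finm: "finite (missing E \<phi> q x \<inter> C)" by (simp add: missing_def)
    have "\<beta> \<in> missing E \<phi> q x \<inter> C" unfolding \<beta>_def using Min_in[OF finm 2(3)] .
    then have \<beta>m: "\<beta> \<in> missing E \<phi> q x" by blast
    have fx: "cfree \<phi> x \<beta>" using missing_free[OF sp \<beta>m] .
    have ab: "\<alpha> \<noteq> \<beta>" using xj freeD[OF fx] by blast
    have Pd: "P = ab_path E \<phi> x \<alpha> \<beta> l" using 2(4) by (simp add: \<beta>_def)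
    note AP = ab_path_props[OF Pd]
    have Pne: "P \<noteq> []" and P0: "P!0 = x" and Pdist: "distinct P" and Palt: "altp \<phi> \<alpha> \<beta> P"
      and Plen: "length P \<le> Suc l" using AP by auto
    have sing: "\<And>z. \<phi> {z} = None"
    proof -
      fix z show "\<phi> {z} = None"
      proof (rule ccontr)
        assume "\<phi> {z} \<noteq> None"
        then have "{z} \<in> E" using sp by (auto simp: supp_ok_def)
        then have "card {z} = 2" using sg by blast
        then show False by simp
      qed
    qed
    have fe: "length P < Suc l \<Longrightarrow> cfree \<phi> (last P) (pcol \<alpha> \<beta> (length P - 1))"
    proof -
      assume a: "length P < Suc l"
      from AP a have "(\<forall>w. {last P, w} \<in> E \<longrightarrow> \<phi> {last P, w} \<noteq> Some (pcol \<alpha> \<beta> (length P - 1))) \<or>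
         (\<exists>w\<in>set P. \<phi> {last P, w} = Some (pcol \<alpha> \<beta> (length P - 1)))" by blast
      then have "\<forall>w. {last P, w} \<in> E \<longrightarrow> \<phi> {last P, w} \<noteq> Some (pcol \<alpha> \<beta> (length P - 1))"
        using no_revisit[OF pr ab _ Pdist Palt Pne _ _ sing] fx P0 by blast
      then show ?thesis unfolding cfree_def
      proof (intro allI notI)
        fix y assume h: "\<forall>w. {last P, w} \<in> E \<longrightarrow> \<phi> {last P, w} \<noteq> Some (pcol \<alpha> \<beta> (length P - 1))"
          and y: "\<phi> {last P, y} = Some (pcol \<alpha> \<beta> (length P - 1))"
        then have "{last P, y} \<in> E" using sp by (auto simp: supp_ok_def)
        then show False using h y by blast
      qed
    qed
    have ae: "\<And>t. Suc t < length P \<Longrightarrow> \<phi> {P!t, P!Suc t} = Some (pcol \<alpha> \<beta> t)"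
      using Palt by (simp add: altp_def)
    have P2: "length P > 1"
    proof (rule ccontr)
      assume "\<not> length P > 1"
      then have "length P = 1" using Pne by (cases P) auto
      then have "last P = x" "length P < Suc l" using P0 Pne l by (auto simp: last_conv_nth)
      then have "cfree \<phi> x \<alpha>" using fe \<open>length P = 1\<close> by (simp add: pcol_def)
      then show False using freeD[of \<phi> x \<alpha> "F!j"] xj by blast
    qed
    have P1: "P!1 = F!j"
    proof -
      have "\<phi> {x, P!1} = Some \<alpha>" using ae[of 0] P2 P0 by (simp add: pcol_def)
      then show ?thesis using properD[OF pr _ xj] by blast
    qed
    have LJ: "(LEAST j. F ! j = P ! 1) = j"
      unfolding P1
    proof (rule Least_equality)
      fix y assume y: "F ! y = F ! j"
      show "j \<le> y"
      proof (rule ccontr)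
        assume "\<not> j \<le> y"
        then have "y < length F" "y \<noteq> j" using jl by auto
        then show False using y dF jl by (simp add: nth_eq_iff_index_eq)
      qed
    qed simp
    have fjm: "cfree \<phi> (F!(j-1)) \<alpha>"
    proof -
      obtain c where "\<phi> {x, F!j} = Some c" "cfree \<phi> (F!(j-1)) c" using fanI_hc[OF fI sp j0 jl] .
      then show ?thesis using xj by simp
    qed
    define s where "s = length P - 1"
    have s0: "s \<noteq> 0" using P2 by (simp add: s_def)
    have sl: "s \<le> l" using Plen by (simp add: s_def)
    have lastPs: "last P = P!s" using Pne by (simp add: s_def last_conv_nth)
    show ?thesis
    proof (cases "s = l")
      case False
      have ph: "\<phi>' = (if last P = F ! (j - 1) then (shift_fan (flip_path \<phi> \<alpha> \<beta> P) x F)({x, last F} := Some \<alpha>)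
          else (shift_fan (flip_path \<phi> \<alpha> \<beta> P) x (take j F))({x, F ! (j - 1)} := Some \<alpha>))"
        using upd_nontrunc[OF up] s0 False LJ by (simp add: s_def \<beta>_def Let_def)
      have feP: "cfree \<phi> (last P) (pcol \<alpha> \<beta> (length P - 1))" using fe False sl by (simp add: s_def)
      show ?thesis
      proof (cases "last P = F ! (j - 1)")
        case True
        have "inv_ok E (U - {e}) ((shift_fan (flip_path \<phi> \<alpha> \<beta> P) x F)({x, last F} := Some \<alpha>))"
          by (rule branchA[OF fI pr sp j0 jl xj fx ab e UE Un Pne P0 Palt P2 P1 feP True fl])
        then show ?thesis using ph True by simp
      next
        case False
        have notin: "F!(j-1) \<notin> set P"
        proof
          assume "F!(j-1) \<in> set P"
          then obtain t where t: "t < length P" "P!t = F!(j-1)" by (metis in_set_conv_nth)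
          show False
          proof (cases "t = 0")
            case True
            have "F!(j-1) \<in> set F" using jl by simp
            then show False using True t P0 xF by simp
          next
            case tn: False
            show False
            proof (cases "Suc t < length P")
              case True then show False using interior_alpha[OF Palt, of t] tn t fjm by simp
            next
              case False
              then have "t = s" using t by (simp add: s_def)
              then show False using \<open>last P \<noteq> F ! (j - 1)\<close> lastPs t by simp
            qed
          qed
        qed
        have xedge: "\<forall>w. \<phi> {x,w} = Some \<alpha> \<longrightarrow> {x,w} \<in> pedges P"
        proof (intro allI impI)
          fix w assume "\<phi> {x,w} = Some \<alpha>"
          then have "w = F!j" by (rule properD[OF pr _ xj])
          then have "w = P!1" using P1 by simp
          then have "{x,w} = {P!0, P!Suc 0}" using P0 by simp
          moreover have "Suc 0 < length P" using P2 by simp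
          ultimately show "{x,w} \<in> pedges P" using pedgeI[of 0 P] by simp
        qed
        have "inv_ok E (U - {e}) ((shift_fan (flip_path \<phi> \<alpha> \<beta> P) x (take j F))({x, F!(j-1)} := Some \<alpha>))"
          by (rule branchB[OF fI pr sp j0 jl xj fx ab e UE pr _ Un Pne P0 Palt _ notin xedge])
             (use feP in auto)
        then show ?thesis using ph False by simp
      qed
    next
      case True
      obtain l' where l': "l' \<in> {1..l}" and ph: "\<phi>' = (let \<phi>1 = \<phi>({P ! (l' - 1), P ! l'} := None); P' = take l' P;
          \<phi>2 = flip_path \<phi>1 \<alpha> \<beta> P' in
          if last P' = F ! (j - 1) then (shift_fan \<phi>2 x F)({x, last F} := Some \<alpha>)
          else (shift_fan \<phi>2 x (take j F))({x, F ! (j - 1)} := Some \<alpha>))"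
        using upd_trunc[OF up] s0 True LJ by (auto simp: s_def \<beta>_def Let_def)
      define f0 where "f0 = {P ! (l' - 1), P ! l'}"
      define \<phi>1 where "\<phi>1 = \<phi>(f0 := None)"
      define P' where "P' = take l' P"
      have l'r: "1 \<le> l'" "l' \<le> s" using l' True by auto
      have lP: "l' < length P" using l'r by (simp add: s_def)
      have f0c: "\<phi> f0 = Some (pcol \<alpha> \<beta> (l' - 1))"
        using ae[of "l' - 1"] l'r lP by (simp add: f0_def)
      have pr1: "proper \<phi>1" unfolding \<phi>1_def by (rule proper_uncolor[OF pr])
      have sub: "\<forall>f c. \<phi>1 f = Some c \<longrightarrow> \<phi> f = Some c" by (simp add: \<phi>1_def)
      have Un1: "\<forall>f\<in>U. \<phi>1 f = None" using Un by (simp add: \<phi>1_def)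
      have P'ne: "P' \<noteq> []" "P'!0 = x" using l'r P0 Pne by (auto simp: P'_def)
      have lenP': "length P' = l'" using lP by (simp add: P'_def)
      have P'altp: "altp \<phi>1 \<alpha> \<beta> P'" unfolding altp_def
      proof (intro allI impI)
        fix t assume t: "Suc t < length P'"
        then have tl: "Suc t < l'" using lenP' by simp
        have ne: "{P!t, P!Suc t} \<noteq> f0"
        proof
          assume "{P!t, P!Suc t} = f0"
          then have "P!t = P!(l'-1) \<or> P!t = P!l'" by (auto simp: f0_def doubleton_eq_iff)
          then show False using Pdist tl lP by (auto simp: nth_eq_iff_index_eq)
        qed
        have "\<phi> {P!t, P!Suc t} = Some (pcol \<alpha> \<beta> t)" using ae tl lP by simp
        then show "\<phi>1 {P'!t, P'!Suc t} = Some (pcol \<alpha> \<beta> t)" using ne tl by (simp add: \<phi>1_def P'_def)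
      qed
      have fe1: "cfree \<phi>1 (last P') (pcol \<alpha> \<beta> (length P' - 1))" if "length P' > 1"
        unfolding cfree_def
      proof (intro allI notI)
        fix w assume w: "\<phi>1 {last P', w} = Some (pcol \<alpha> \<beta> (length P' - 1))"
        have "last P' = P!(l'-1)" using P'ne lenP' by (simp add: last_conv_nth P'_def)
        then have w1: "\<phi> {P!(l'-1), w} = Some (pcol \<alpha> \<beta> (l' - 1))" and w2: "{P!(l'-1), w} \<noteq> f0"
          using w lenP' by (auto simp: \<phi>1_def split: if_splits)
        have w3: "\<phi> {P!(l'-1), P!l'} = Some (pcol \<alpha> \<beta> (l' - 1))" using f0c by (simp add: f0_def)
        have "w = P!l'" by (rule properD[OF pr w1 w3])
        then show False using \<open>{P!(l'-1), w} \<noteq> f0\<close> by (simp add: f0_def)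
      qed
      have notin: "F!(j-1) \<notin> set P'"
      proof
        assume "F!(j-1) \<in> set P'"
        then obtain t where t0: "t < length P'" "P'!t = F!(j-1)" by (metis in_set_conv_nth)
        then have t: "t < l'" "P!t = F!(j-1)" using lenP' by (auto simp: P'_def)
        show False
        proof (cases "t = 0")
          case True
          have "F!(j-1) \<in> set F" using jl by simp
          then show False using True t P0 xF by simp
        next
          case tn: False
          have "Suc t < length P" using t l'r by (simp add: s_def)
          then show False using interior_alpha[OF Palt, of t] tn t fjm by simp
        qed
      qed
      have xedge: "\<forall>w. \<phi>1 {x,w} = Some \<alpha> \<longrightarrow> {x,w} \<in> pedges P'"
      proof (intro allI impI)
        fix w assume w1: "\<phi>1 {x,w} = Some \<alpha>"
        then have "\<phi> {x,w} = Some \<alpha>" using sub by blast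
        then have "w = F!j" by (rule properD[OF pr _ xj])
        then have "w = P!1" using P1 by simp
        then have xw: "{x,w} = {P!0, P!Suc 0}" using P0 by simp
        show "{x,w} \<in> pedges P'"
        proof (cases "l' = 1")
          case True
          then have "{x,w} = f0" using xw by (simp add: f0_def)
          then show ?thesis using w1 by (simp add: \<phi>1_def)
        next
          case False
          then have "Suc 0 < length P'" using lenP' l'r by simp
          moreover have "{x,w} = {P'!0, P'!Suc 0}" using xw l'r False by (simp add: P'_def)
          ultimately show ?thesis using pedgeI[of 0 P'] by simp
        qed
      qed
      have kept: "\<forall>i. 0 < i \<and> i < j \<longrightarrow> \<phi>1 {x, F!i} = \<phi> {x, F!i}"
      proof (intro allI impI)
        fix i assume i: "0 < i \<and> i < j"
        then have iF: "0 < i" "i < length F" using jl by auto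
        obtain c where c: "\<phi> {x, F!i} = Some c" "cfree \<phi> (F!(i-1)) c"
          by (rule fanI_hc[OF fI sp iF])
        have ca: "c \<noteq> \<alpha>"
        proof
          assume "c = \<alpha>"
          then have "F!i = F!j" using properD[OF pr _ xj] c(1) by simp
          then show False using dF iF jl i by (simp add: nth_eq_iff_index_eq)
        qed
        have cb: "c \<noteq> \<beta>" using c(1) freeD[OF fx] by blast
        have "{x, F!i} \<noteq> f0"
        proof
          assume "{x, F!i} = f0"
          then have "c = pcol \<alpha> \<beta> (l' - 1)" using c(1) f0c by simp
          then show False using ca cb col_in[of \<alpha> \<beta> "l' - 1"] by simp
        qed
        then show "\<phi>1 {x, F!i} = \<phi> {x, F!i}" by (simp add: \<phi>1_def)
      qed
      have B: "inv_ok E (U - {e}) ((shift_fan (flip_path \<phi>1 \<alpha> \<beta> P') x (take j F))({x, F!(j-1)} := Some \<alpha>))"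
        by (rule branchB[OF fI pr sp j0 jl xj fx ab e UE pr1 sub Un1 P'ne P'altp fe1 notin xedge kept])
      have "last P' \<noteq> F ! (j - 1)" using notin last_in_set[OF P'ne(1)] by auto
      then have "\<phi>' = (shift_fan (flip_path \<phi>1 \<alpha> \<beta> P') x (take j F))({x, F!(j-1)} := Some \<alpha>)"
        using ph unfolding Let_def \<phi>1_def f0_def P'_def by presburger
      then show ?thesis using B by simp
    qed
  qed
qed


lemma back_zero:
  assumes pr: "proper \<phi>" and a: "altp \<phi> \<alpha> \<beta> P" and a': "altp \<phi> \<alpha>' \<beta>' P'"
    and ab': "\<alpha>' \<noteq> \<beta>'" and S: "{\<alpha>,\<beta>} = {\<alpha>',\<beta>'}"
    and fx: "cfree \<phi> (P!0) \<beta>"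
    and l1: "Suc 0 < length P" and l2: "Suc (Suc k) < length P'"
    and e1: "P!0 = P'!Suc k" and e2: "P!1 = P'!Suc (Suc k)"
  shows False
proof -
  have c1: "\<phi> {P!0, P!Suc 0} = Some \<alpha>" using a l1 by (simp add: altp_def pcol_def)
  have c2: "\<phi> {P'!Suc k, P'!Suc (Suc k)} = Some (pcol \<alpha>' \<beta>' (Suc k))" using a' l2 by (simp add: altp_def)
  have "pcol \<alpha>' \<beta>' (Suc k) = \<alpha>" using c1 c2 e1 e2 by simp
  moreover have c3: "\<phi> {P'!k, P'!Suc k} = Some (pcol \<alpha>' \<beta>' k)" using a' l2 by (simp add: altp_def)
  moreover have "pcol \<alpha>' \<beta>' k \<noteq> pcol \<alpha>' \<beta>' (Suc k)" using col_neq_Suc[OF ab'] by metis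
  ultimately have "pcol \<alpha>' \<beta>' k = \<beta>" using S col_in[of \<alpha>' \<beta>' k] by (auto simp: doubleton_eq_iff)
  then have "\<phi> {P'!k, P!0} = Some \<beta>" using c3 e1 by simp
  then show False using freeD'[OF fx] by blast
qed

lemma back_unique:
  assumes pr: "proper \<phi>" and a: "altp \<phi> \<alpha> \<beta> P" and a': "altp \<phi> \<alpha>' \<beta>' P'"
    and ab: "\<alpha> \<noteq> \<beta>" and S: "{\<alpha>,\<beta>} = {\<alpha>',\<beta>'}"
    and fx: "cfree \<phi> (P!0) \<beta>" and fx': "cfree \<phi> (P'!0) \<beta>'"
  shows "Suc i < length P \<Longrightarrow> Suc i' < length P' \<Longrightarrow> P!i = P'!i' \<Longrightarrow> P!Suc i = P'!Suc i'
    \<Longrightarrow> i = i' \<and> P!0 = P'!0"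
proof (induction i arbitrary: i')
  have ab': "\<alpha>' \<noteq> \<beta>'" using ab S by (auto simp: doubleton_eq_iff)
  case 0
  show ?case
  proof (cases i')
    case 0 then show ?thesis using "0.prems" by simp
  next
    case (Suc k)
    have False by (rule back_zero[OF pr a a' ab' S fx, of k]) (use "0.prems" Suc in auto)
    then show ?thesis ..
  qed
next
  case (Suc i)
  have ab': "\<alpha>' \<noteq> \<beta>'" using ab S by (auto simp: doubleton_eq_iff)
  show ?case
  proof (cases i')
    case 0
    have False by (rule back_zero[OF pr a' a ab S[symmetric] fx', of i]) (use Suc.prems 0 in auto)
    then show ?thesis ..
  next
    case (Suc k)
    have c: "\<phi> {P!Suc i, P!Suc (Suc i)} = Some (pcol \<alpha> \<beta> (Suc i))" using a Suc.prems(1) by (simp add: altp_def)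
    have c': "\<phi> {P'!Suc k, P'!Suc (Suc k)} = Some (pcol \<alpha>' \<beta>' (Suc k))" using a' Suc.prems(2) Suc by (simp add: altp_def)
    have same: "pcol \<alpha> \<beta> (Suc i) = pcol \<alpha>' \<beta>' (Suc k)" using c c' Suc.prems Suc by simp
    have d: "\<phi> {P!i, P!Suc i} = Some (pcol \<alpha> \<beta> i)" using a Suc.prems(1) by (simp add: altp_def)
    have d': "\<phi> {P'!k, P'!Suc k} = Some (pcol \<alpha>' \<beta>' k)" using a' Suc.prems(2) Suc by (simp add: altp_def)
    have n1: "pcol \<alpha> \<beta> i \<noteq> pcol \<alpha> \<beta> (Suc i)" using col_neq_Suc[OF ab] by metis
    have n2: "pcol \<alpha>' \<beta>' k \<noteq> pcol \<alpha>' \<beta>' (Suc k)" using col_neq_Suc[OF ab'] by metis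
    have "pcol \<alpha> \<beta> i = pcol \<alpha>' \<beta>' k"
      using n1 n2 same S col_in[of \<alpha> \<beta> i] col_in[of \<alpha>' \<beta>' k] col_in[of \<alpha> \<beta> "Suc i"]
      by (auto simp: doubleton_eq_iff)
    then have "\<phi> {P!Suc i, P'!k} = Some (pcol \<alpha> \<beta> i)" using d' Suc.prems Suc by (simp add: insert_commute)
    then have "P!i = P'!k" by (rule properD'[OF pr d])
    then have "i = k \<and> P!0 = P'!0" using Suc.IH[of k] Suc.prems Suc by simp
    then show ?thesis using Suc by simp
  qed
qed


definition Lset :: "'a set set \<Rightarrow> 'a coloring \<Rightarrow> nat \<Rightarrow> nat set \<Rightarrow> nat \<Rightarrow> 'a \<Rightarrow> 'a set \<Rightarrow> 'a \<Rightarrow> nat set" where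
  "Lset E \<phi> q C l v e x = {l' \<in> {1..l}. \<exists>F P \<alpha>. vizing_chain E \<phi> q e x C l = Some ((F,P),\<alpha>) \<and>
      length P - 1 = l \<and> (v = P!(l'-1) \<or> v = P!l')}"

lemma trunc_data:
  assumes sg: "\<forall>f\<in>E. card f = 2" and iv: "inv_ok E U \<phi>" and eU: "e \<in> U" and xe: "x \<in> e"
    and vc: "vizing_chain E \<phi> q e x C l = Some ((F,P),\<alpha>)" and len: "length P - 1 = l" and l: "1 \<le> l"
  shows "altp \<phi> \<alpha> (Min (missing E \<phi> q x \<inter> C)) P \<and> cfree \<phi> x (Min (missing E \<phi> q x \<inter> C)) \<and>
    \<alpha> \<noteq> Min (missing E \<phi> q x \<inter> C) \<and> \<alpha> \<in> C \<and> Min (missing E \<phi> q x \<inter> C) \<in> C \<and>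
    P!0 = x \<and> length P = Suc l"
proof -
  have pr: "proper \<phi>" and sp: "supp_ok E \<phi>" and UE: "U \<subseteq> E"
    using iv by (auto simp: inv_ok_def)
  have eE: "e \<in> E" using eU UE by blast
  show ?thesis
    using vc
  proof (cases rule: vc_cases)
    case (1 j)
    then show ?thesis using len l by simp
  next
    case (2 j)
    note MF = make_fan_props[OF 2(1) sg eE xe]
    have jl: "j < length F" and xj: "\<phi> {x, F!j} = Some \<alpha>" and aC: "\<alpha> \<in> C" using MF 2(2) by auto
    define \<beta> where "\<beta> = Min (missing E \<phi> q x \<inter> C)"
    have finm: "finite (missing E \<phi> q x \<inter> C)" by (simp add: missing_def)
    have bb: "\<beta> \<in> missing E \<phi> q x \<inter> C" unfolding \<beta>_def using Min_in[OF finm 2(3)] .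
    then have \<beta>m: "\<beta> \<in> missing E \<phi> q x" and bC: "\<beta> \<in> C" by auto
    have fx: "cfree \<phi> x \<beta>" using missing_free[OF sp \<beta>m] .
    have ab: "\<alpha> \<noteq> \<beta>" using xj freeD[OF fx] by blast
    have Pd: "P = ab_path E \<phi> x \<alpha> \<beta> l" using 2(4) by (simp add: \<beta>_def)
    note AP = ab_path_props[OF Pd]
    have "length P = Suc l" using AP len by auto
    then show ?thesis using AP fx ab aC bC unfolding \<beta>_def by auto
  qed
qed

lemma card_fiber_bound:
  assumes "finite S" "\<And>y. y \<in> g ` S \<Longrightarrow> card {s\<in>S. g s = y} \<le> k"
  shows "card S \<le> card (g ` S) * k"
proof -
  have "S = (\<Union>y\<in>g ` S. {s\<in>S. g s = y})" by auto
  then have "card S = card (\<Union>y\<in>g ` S. {s\<in>S. g s = y})" by simp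
  also have "\<dots> \<le> (\<Sum>y\<in>g ` S. card {s\<in>S. g s = y})" by (rule card_UN_le) (use assms in simp)
  also have "\<dots> \<le> (\<Sum>y\<in>g ` S. k)" by (rule sum_mono) (use assms in simp)
  also have "\<dots> = card (g ` S) * k" by simp
  finally show ?thesis .
qed

lemma minmax_eq: "min (a::nat) b = min c d \<Longrightarrow> max a b = max c d \<Longrightarrow> {a,b} = {c,d}"
  by (auto simp: min_def max_def split: if_splits)

lemma pairs_bound:
  fixes C :: "nat set"
  assumes "finite C"
  shows "2 * card {(a,b). a \<in> C \<and> b \<in> C \<and> a < b} \<le> card C * card C"
proof -
  define A where "A = {(a,b). a \<in> C \<and> b \<in> C \<and> a < b}"
  define B where "B = {(a,b). a \<in> C \<and> b \<in> C \<and> b < a}"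
  have AC: "A \<subseteq> C \<times> C" and BC: "B \<subseteq> C \<times> C" by (auto simp: A_def B_def)
  have fA: "finite A" and fB: "finite B" using AC BC assms finite_subset by blast+
  have "B = prod.swap ` A" by (auto simp: A_def B_def image_iff)
  then have cB: "card B = card A" by (simp add: card_image)
  have "A \<inter> B = {}" by (auto simp: A_def B_def)
  then have "card (A \<union> B) = card A + card B" using fA fB by (simp add: card_Un_disjoint)
  moreover have "card (A \<union> B) \<le> card (C \<times> C)" using AC BC assms by (intro card_mono) auto
  ultimately show ?thesis using cB by (simp add: A_def card_cartesian_product)
qed

lemma card_color_nbrs:
  assumes pr: "proper \<phi>" and fin: "finite V" and sp: "supp_ok E \<phi>" and EV: "\<forall>e\<in>E. e \<subseteq> V"
  shows "card {z. \<phi> {v,z} = Some a} \<le> 1" and "finite {z. \<phi> {v,z} = Some a}"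
proof -
  have sub: "{z. \<phi> {v,z} = Some a} \<subseteq> V"
  proof
    fix z assume "z \<in> {z. \<phi> {v,z} = Some a}"
    then have "{v,z} \<in> E" using sp by (auto simp: supp_ok_def)
    then show "z \<in> V" using EV by auto
  qed
  show f: "finite {z. \<phi> {v,z} = Some a}" using finite_subset[OF sub fin] .
  have "\<forall>y\<in>{z. \<phi> {v,z} = Some a}. \<forall>w\<in>{z. \<phi> {v,z} = Some a}. y = w"
    using properD[OF pr] by blast
  then show "card {z. \<phi> {v,z} = Some a} \<le> 1" using card_le_Suc0_iff_eq[OF f] by simp
qed

lemma W_bound:
  assumes pr: "proper \<phi>" and fin: "finite V" and sp: "supp_ok E \<phi>" and EV: "\<forall>e\<in>E. e \<subseteq> V"
  shows "card {(u,w). (u = v \<or> w = v) \<and> (\<phi> {u,w} = Some a \<or> \<phi> {u,w} = Some b)} \<le> 4"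
    and "finite {(u,w). (u = v \<or> w = v) \<and> (\<phi> {u,w} = Some a \<or> \<phi> {u,w} = Some b)}"
proof -
  define N where "N = {z. \<phi> {v,z} = Some a} \<union> {z. \<phi> {v,z} = Some b}"
  note ca = card_color_nbrs[OF pr fin sp EV, of v a] and cb = card_color_nbrs[OF pr fin sp EV, of v b]
  have fN: "finite N" using ca cb by (simp add: N_def)
  have cN: "card N \<le> 2"
  proof -
    have "card N \<le> card {z. \<phi> {v,z} = Some a} + card {z. \<phi> {v,z} = Some b}"
      unfolding N_def by (rule card_Un_le)
    then show ?thesis using ca cb by simp
  qed
  have sub: "{(u,w). (u = v \<or> w = v) \<and> (\<phi> {u,w} = Some a \<or> \<phi> {u,w} = Some b)}
      \<subseteq> (\<lambda>z. (v,z)) ` N \<union> (\<lambda>z. (z,v)) ` N"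
    by (auto simp: N_def insert_commute)
  have f2: "finite ((\<lambda>z. (v,z)) ` N \<union> (\<lambda>z. (z,v)) ` N)" using fN by simp
  have "card ((\<lambda>z. (v,z)) ` N \<union> (\<lambda>z. (z,v)) ` N) \<le> card ((\<lambda>z. (v,z)) ` N) + card ((\<lambda>z. (z,v)) ` N)"
    by (rule card_Un_le)
  also have "\<dots> \<le> card N + card N" by (intro add_mono card_image_le fN)
  finally have "card ((\<lambda>z. (v,z)) ` N \<union> (\<lambda>z. (z,v)) ` N) \<le> 4" using cN by simp
  then show "card {(u,w). (u = v \<or> w = v) \<and> (\<phi> {u,w} = Some a \<or> \<phi> {u,w} = Some b)} \<le> 4"
    using card_mono[OF f2 sub] by simp
  show "finite {(u,w). (u = v \<or> w = v) \<and> (\<phi> {u,w} = Some a \<or> \<phi> {u,w} = Some b)}"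
    using finite_subset[OF sub f2] .
qed


lemma T_bound:
  assumes pr: "proper \<phi>" and fin: "finite V" and sp: "supp_ok E \<phi>" and EV: "\<forall>e\<in>E. e \<subseteq> V"
    and fC: "finite C"
  shows "card {(a,b,u,w). a \<in> C \<and> b \<in> C \<and> a < b \<and> (u = v \<or> w = v) \<and> (\<phi> {u,w} = Some a \<or> \<phi> {u,w} = Some b)}
         \<le> 2 * card C * card C"
    and "finite {(a,b,u,w). a \<in> C \<and> b \<in> C \<and> a < b \<and> (u = v \<or> w = v) \<and> (\<phi> {u,w} = Some a \<or> \<phi> {u,w} = Some b)}"
proof -
  define Pairs where "Pairs = {(a,b). a \<in> C \<and> b \<in> C \<and> a < (b::nat)}"
  define W where "W = (\<lambda>a b. {(u,w). (u = v \<or> w = v) \<and> (\<phi> {u,w} = Some a \<or> \<phi> {u,w} = Some b)})"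
  have "Pairs \<subseteq> C \<times> C" by (auto simp: Pairs_def)
  then have fP: "finite Pairs" using fC finite_subset by blast
  have eq: "{(a,b,u,w). a \<in> C \<and> b \<in> C \<and> a < b \<and> (u = v \<or> w = v) \<and> (\<phi> {u,w} = Some a \<or> \<phi> {u,w} = Some b)}
     = (\<Union>p\<in>Pairs. (\<lambda>(u,w). (fst p, snd p, u, w)) ` W (fst p) (snd p))"
    by (auto simp: Pairs_def W_def image_iff)
  have fW: "\<And>a b. finite (W a b)" unfolding W_def by (rule W_bound(2)[OF pr fin sp EV])
  have cW: "\<And>a b. card (W a b) \<le> 4" unfolding W_def by (rule W_bound(1)[OF pr fin sp EV])
  have "card (\<Union>p\<in>Pairs. (\<lambda>(u,w). (fst p, snd p, u, w)) ` W (fst p) (snd p))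
      \<le> (\<Sum>p\<in>Pairs. card ((\<lambda>(u,w). (fst p, snd p, u, w)) ` W (fst p) (snd p)))"
    by (rule card_UN_le[OF fP])
  also have "\<dots> \<le> (\<Sum>p\<in>Pairs. 4)"
  proof (rule sum_mono)
    fix p show "card ((\<lambda>(u,w). (fst p, snd p, u, w)) ` W (fst p) (snd p)) \<le> 4"
      using card_image_le[OF fW, of "\<lambda>(u,w). (fst p, snd p, u, w)" "fst p" "snd p"] cW[of "fst p" "snd p"]
      by linarith
  qed
  also have "\<dots> = 4 * card Pairs" by simp
  also have "\<dots> \<le> 2 * card C * card C" using pairs_bound[OF fC] by (simp add: Pairs_def)
  finally show "card {(a,b,u,w). a \<in> C \<and> b \<in> C \<and> a < b \<and> (u = v \<or> w = v) \<and> (\<phi> {u,w} = Some a \<or> \<phi> {u,w} = Some b)}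
         \<le> 2 * card C * card C" unfolding eq .
  show "finite {(a,b,u,w). a \<in> C \<and> b \<in> C \<and> a < b \<and> (u = v \<or> w = v) \<and> (\<phi> {u,w} = Some a \<or> \<phi> {u,w} = Some b)}"
    unfolding eq using fP fW by blast
qed

lemma degree_le_max: "finite V \<Longrightarrow> x \<in> V \<Longrightarrow> degree E x \<le> max_degree V E"
  unfolding max_degree_def by (rule Max_ge) auto

lemma count_bound:
  assumes G: "simple_graph V E" and iv: "inv_ok E U \<phi>" and fU: "finite U" and fC: "finite C"
    and cC: "card C \<le> \<kappa>" and l: "1 \<le> l"
  shows "(\<Sum>e\<in>U. \<Sum>x\<in>e. card (Lset E \<phi> q C l v e x)) \<le> 2 * max_degree V E * \<kappa>^2"
proof -
  have fV: "finite V" and EV: "\<forall>e\<in>E. e \<subseteq> V" and sg: "\<forall>f\<in>E. card f = 2"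
    using G by (auto simp: simple_graph_def)
  have pr: "proper \<phi>" and sp: "supp_ok E \<phi>" and UE: "U \<subseteq> E" using iv by (auto simp: inv_ok_def)
  have fe: "\<And>e. e \<in> U \<Longrightarrow> finite e" using UE sg by (metis card.infinite subsetD zero_neq_numeral)
  define S where "S = Sigma U (\<lambda>e. Sigma e (\<lambda>x. Lset E \<phi> q C l v e x))"
  have fL: "\<And>e x. finite (Lset E \<phi> q C l v e x)" by (simp add: Lset_def)
  have fS: "finite S" unfolding S_def using fU fe fL by (intro finite_SigmaI) auto
  have cS: "card S = (\<Sum>e\<in>U. \<Sum>x\<in>e. card (Lset E \<phi> q C l v e x))"
    unfolding S_def using fU fe fL by (simp add: card_SigmaI)
  define \<Delta> where "\<Delta> = max_degree V E"
  define g where "g = (\<lambda>(e,x,l'). let r = the (vizing_chain E \<phi> q e x C l); P = snd (fst r); \<alpha> = snd r;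
      \<beta> = Min (missing E \<phi> q x \<inter> C) in (min \<alpha> \<beta>, max \<alpha> \<beta>, P!(l'-1), P!l'))"
  define T where "T = {(a,b,u,w). a \<in> C \<and> b \<in> C \<and> a < b \<and> (u = v \<or> w = v) \<and> (\<phi> {u,w} = Some a \<or> \<phi> {u,w} = Some b)}"
  have data: "\<exists>F P \<alpha>. vizing_chain E \<phi> q e x C l = Some ((F,P),\<alpha>) \<and> length P - 1 = l \<and> (v = P!(l'-1) \<or> v = P!l')
      \<and> altp \<phi> \<alpha> (Min (missing E \<phi> q x \<inter> C)) P \<and> cfree \<phi> x (Min (missing E \<phi> q x \<inter> C)) \<and>
    \<alpha> \<noteq> Min (missing E \<phi> q x \<inter> C) \<and> \<alpha> \<in> C \<and> Min (missing E \<phi> q x \<inter> C) \<in> C \<and>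
    P!0 = x \<and> length P = Suc l \<and> 1 \<le> l' \<and> l' \<le> l \<and> x \<in> e \<and> e \<in> U"
    if "(e,x,l') \<in> S" for e x l'
  proof -
    have m: "e \<in> U" "x \<in> e" "l' \<in> Lset E \<phi> q C l v e x" using that by (auto simp: S_def)
    then obtain F P \<alpha> where vc: "vizing_chain E \<phi> q e x C l = Some ((F,P),\<alpha>)" "length P - 1 = l"
      "v = P!(l'-1) \<or> v = P!l'" "1 \<le> l'" "l' \<le> l" by (auto simp: Lset_def)
    from trunc_data[OF sg iv m(1,2) vc(1,2) l] vc m show ?thesis by blast
  qed
  have gval: "g (e,x,l') = (min \<alpha> (Min (missing E \<phi> q x \<inter> C)), max \<alpha> (Min (missing E \<phi> q x \<inter> C)), P!(l'-1), P!l')"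
    if "vizing_chain E \<phi> q e x C l = Some ((F,P),\<alpha>)" for e x l' F P \<alpha>
    using that by (simp add: g_def Let_def)
  have gT: "g ` S \<subseteq> T"
  proof
    fix y assume "y \<in> g ` S"
    then obtain e x l' where s: "(e,x,l') \<in> S" "y = g (e,x,l')" by auto
    from data[OF s(1)] obtain F P \<alpha> where d: "vizing_chain E \<phi> q e x C l = Some ((F,P),\<alpha>)"
      "v = P!(l'-1) \<or> v = P!l'" "altp \<phi> \<alpha> (Min (missing E \<phi> q x \<inter> C)) P"
      "\<alpha> \<noteq> Min (missing E \<phi> q x \<inter> C)" "\<alpha> \<in> C" "Min (missing E \<phi> q x \<inter> C) \<in> C"
      "length P = Suc l" "1 \<le> l'" "l' \<le> l" by blast
    define \<beta> where "\<beta> = Min (missing E \<phi> q x \<inter> C)"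
    have y: "y = (min \<alpha> \<beta>, max \<alpha> \<beta>, P!(l'-1), P!l')" using s(2) gval[OF d(1)] by (simp add: \<beta>_def)
    have sl: "Suc (l'-1) = l'" "Suc (l'-1) < length P" using d(7,8,9) by auto
    have "\<phi> {P!(l'-1), P!Suc (l'-1)} = Some (pcol \<alpha> \<beta> (l'-1))"
      using d(3)[unfolded altp_def, rule_format, OF sl(2)] by (simp add: \<beta>_def)
    then have c: "\<phi> {P!(l'-1), P!l'} = Some \<alpha> \<or> \<phi> {P!(l'-1), P!l'} = Some \<beta>"
      using d(8) by (simp add: pcol_def split: if_splits)
    have "min \<alpha> \<beta> < max \<alpha> \<beta>" using d(4) by (simp add: \<beta>_def min_def max_def)
    moreover have "min \<alpha> \<beta> \<in> C" "max \<alpha> \<beta> \<in> C" using d(5,6) by (auto simp: \<beta>_def min_def max_def)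
    moreover have "\<phi> {P!(l'-1), P!l'} = Some (min \<alpha> \<beta>) \<or> \<phi> {P!(l'-1), P!l'} = Some (max \<alpha> \<beta>)"
      using c by (auto simp: min_def max_def)
    ultimately show "y \<in> T" using y d(2) by (auto simp: T_def)
  qed
  have fib: "card {s\<in>S. g s = y} \<le> \<Delta>" if ys: "y \<in> g ` S" for y
  proof -
    obtain s1 where s1: "s1 \<in> S" "y = g s1" using ys by blast
    obtain e0 x0 l0 where "s1 = (e0,x0,l0)" by (cases s1) auto
    then have s0: "(e0,x0,l0) \<in> S" "y = g (e0,x0,l0)" using s1 by auto
    from data[OF s0(1)] obtain F0 P0 \<alpha>0 where d0: "vizing_chain E \<phi> q e0 x0 C l = Some ((F0,P0),\<alpha>0)"
      "altp \<phi> \<alpha>0 (Min (missing E \<phi> q x0 \<inter> C)) P0" "cfree \<phi> x0 (Min (missing E \<phi> q x0 \<inter> C))"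
      "\<alpha>0 \<noteq> Min (missing E \<phi> q x0 \<inter> C)" "P0!0 = x0" "length P0 = Suc l" "1 \<le> l0" "l0 \<le> l" "x0 \<in> e0" "e0 \<in> U"
      by blast
    have sub: "{s\<in>S. g s = y} \<subseteq> (\<lambda>e. (e,x0,l0)) ` {e\<in>E. x0 \<in> e}"
    proof
      fix s assume "s \<in> {s\<in>S. g s = y}"
      then obtain e x l' where s: "s = (e,x,l')" "(e,x,l') \<in> S" "g (e,x,l') = y" by (cases s) auto
      from data[OF s(2)] obtain F P \<alpha> where d: "vizing_chain E \<phi> q e x C l = Some ((F,P),\<alpha>)"
        "altp \<phi> \<alpha> (Min (missing E \<phi> q x \<inter> C)) P" "cfree \<phi> x (Min (missing E \<phi> q x \<inter> C))"
        "\<alpha> \<noteq> Min (missing E \<phi> q x \<inter> C)" "P!0 = x" "length P = Suc l" "1 \<le> l'" "l' \<le> l" "x \<in> e" "e \<in> U"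
        by blast
      have geq: "g (e,x,l') = g (e0,x0,l0)" using s(3) s0(2) by simp
      then have mm: "min \<alpha> (Min (missing E \<phi> q x \<inter> C)) = min \<alpha>0 (Min (missing E \<phi> q x0 \<inter> C))"
        "max \<alpha> (Min (missing E \<phi> q x \<inter> C)) = max \<alpha>0 (Min (missing E \<phi> q x0 \<inter> C))"
        "P!(l'-1) = P0!(l0-1)" "P!l' = P0!l0"
        using gval[OF d(1)] gval[OF d0(1)] by auto
      have S2: "{\<alpha>, Min (missing E \<phi> q x \<inter> C)} = {\<alpha>0, Min (missing E \<phi> q x0 \<inter> C)}"
        using minmax_eq[OF mm(1,2)] .
      have i1: "Suc (l'-1) < length P" "Suc (l0-1) < length P0" using d(6,7,8) d0(6,7,8) by auto
      have i2: "P!Suc (l'-1) = P0!Suc (l0-1)" using mm(4) d(7) d0(7) by simp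
      have "l'-1 = l0-1 \<and> P!0 = P0!0"
        by (rule back_unique[OF pr d(2) d0(2) d(4) S2 _ _ i1 mm(3) i2]) (use d(3,5) d0(3,5) in auto)
      then have "l' = l0" "x = x0" using d(5,7) d0(5,7) by auto
      moreover have "e \<in> E" using d(10) UE by blast
      ultimately show "s \<in> (\<lambda>e. (e,x0,l0)) ` {e\<in>E. x0 \<in> e}" using s(1) d(9) by auto
    qed
    have fE: "finite E" using G by (metis finite_Pow_iff finite_subset simple_graph_def subsetI PowI)
    have "card {s\<in>S. g s = y} \<le> card ((\<lambda>e. (e,x0,l0)) ` {e\<in>E. x0 \<in> e})"
      by (rule card_mono) (use fE sub in auto)
    also have "\<dots> \<le> card {e\<in>E. x0 \<in> e}" using fE by (intro card_image_le) auto
    also have "\<dots> = degree E x0" by (simp add: degree_def)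
    also have "\<dots> \<le> \<Delta>" unfolding \<Delta>_def
    proof (rule degree_le_max[OF fV])
      show "x0 \<in> V" using d0(9,10) UE EV by blast
    qed
    finally show ?thesis .
  qed
  have "card S \<le> card (g ` S) * \<Delta>" by (rule card_fiber_bound[OF fS fib])
  also have "\<dots> \<le> card T * \<Delta>"
  proof -
    have "card (g ` S) \<le> card T" using T_bound(2)[OF pr fV sp EV fC, of v] gT by (intro card_mono) (auto simp: T_def)
    then show ?thesis by simp
  qed
  also have "\<dots> \<le> 2 * card C * card C * \<Delta>" using T_bound(1)[OF pr fV sp EV fC, of v] by (simp add: T_def)
  also have "\<dots> \<le> 2 * \<kappa> * \<kappa> * \<Delta>" using cC by (intro mult_mono) auto
  finally show ?thesis using cS by (simp add: \<Delta>_def power2_eq_square algebra_simps)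
qed


lemma sample_list_len: "xs \<in> set_pmf (sample_list k S) \<Longrightarrow> length xs = k"
  by (induction k arbitrary: xs) auto

lemma sample_set_card: "C \<in> set_pmf (map_pmf set (sample_list k S)) \<Longrightarrow> finite C \<and> card C \<le> k"
  using sample_list_len card_length by fastforce

lemma prob_bind_pmf_of_set:
  assumes "finite U" "U \<noteq> {}"
  shows "measure_pmf.prob (bind_pmf (pmf_of_set U) f) S = (\<Sum>e\<in>U. measure_pmf.prob (f e) S) / card U"
proof -
  have "ennreal (measure_pmf.prob (bind_pmf (pmf_of_set U) f) S) = emeasure (bind_pmf (pmf_of_set U) f) S"
    by (simp add: measure_pmf.emeasure_eq_measure)
  also have "\<dots> = (\<integral>\<^sup>+e. emeasure (f e) S \<partial>pmf_of_set U)" by simp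
  also have "\<dots> = (\<Sum>e\<in>U. emeasure (f e) S) / card U" by (rule nn_integral_pmf_of_set[OF assms(2,1)])
  also have "\<dots> = ennreal (\<Sum>e\<in>U. measure_pmf.prob (f e) S) / ennreal (card U)"
    by (simp add: measure_pmf.emeasure_eq_measure sum_ennreal ennreal_of_nat_eq_real_of_nat)
  also have "\<dots> = ennreal ((\<Sum>e\<in>U. measure_pmf.prob (f e) S) / card U)"
    using assms by (subst divide_ennreal) (auto simp: sum_nonneg card_gt_0_iff)
  finally show ?thesis by (subst (asm) ennreal_inj) (auto intro!: divide_nonneg_nonneg sum_nonneg)
qed

lemma bind_le_ind:
  assumes "\<And>y. y \<in> set_pmf p \<Longrightarrow> y \<notin> A \<Longrightarrow> measure_pmf.prob (f y) S = 0"
  shows "measure_pmf.prob (bind_pmf p f) S \<le> measure_pmf.prob p A"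
proof -
  have "ennreal (measure_pmf.prob (bind_pmf p f) S) = emeasure (bind_pmf p f) S"
    by (simp add: measure_pmf.emeasure_eq_measure)
  also have "\<dots> = (\<integral>\<^sup>+y. emeasure (f y) S \<partial>p)" by simp
  also have "\<dots> \<le> (\<integral>\<^sup>+y. indicator A y \<partial>p)"
  proof (rule nn_integral_mono_AE)
    show "AE y in measure_pmf p. emeasure (measure_pmf (f y)) S \<le> indicator A y"
      unfolding AE_measure_pmf_iff
    proof
      fix y assume y: "y \<in> set_pmf p"
      show "emeasure (measure_pmf (f y)) S \<le> indicator A y"
      proof (cases "y \<in> A")
        case True then show ?thesis by (simp add: measure_pmf.emeasure_eq_measure)
      next
        case False then show ?thesis using assms[OF y] by (simp add: measure_pmf.emeasure_eq_measure)
      qed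
    qed
  qed
  also have "\<dots> = emeasure p A" by simp
  also have "\<dots> = ennreal (measure_pmf.prob p A)" by (simp add: measure_pmf.emeasure_eq_measure)
  finally show ?thesis by (simp add: ennreal_le_iff)
qed

lemma upd_noflag:
  assumes "length P - 1 \<noteq> l" "r \<in> set_pmf (stage1_update E \<phi> q l x C F P \<alpha>)"
  shows "snd r = None"
  using assms by (auto simp: stage1_update_def Let_def split: if_splits)

lemma upd_flag_prob:
  assumes "length P - 1 = l" "l \<noteq> 0"
  shows "measure_pmf.prob (stage1_update E \<phi> q l x C F P \<alpha>) {r. \<exists>f. snd r = Some f \<and> v \<in> f}
     = card {l'\<in>{1..l}. v = P!(l'-1) \<or> v = P!l'} / l"
proof -
  define H where "H = (\<lambda>l'. (\<phi>({P ! (l' - 1), P ! l'} := None), take l' P, Some {P ! (l' - 1), P ! l'}))"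
  have "\<exists>G. stage1_update E \<phi> q l x C F P \<alpha> = map_pmf G (map_pmf H (pmf_of_set {1..l})) \<and>
      (\<forall>t. snd (G t) = snd (snd t))"
    using assms unfolding stage1_update_def H_def Let_def
    apply simp
    apply (rule exI, rule conjI, rule refl)
    apply (auto split: prod.splits)
    done
  then obtain G where eq: "stage1_update E \<phi> q l x C F P \<alpha> = map_pmf G (map_pmf H (pmf_of_set {1..l}))"
    and sG: "\<And>t. snd (G t) = snd (snd t)" by blast
  have "(H -` (G -` {r. \<exists>f. snd r = Some f \<and> v \<in> f})) = {l'. v = P!(l'-1) \<or> v = P!l'}"
    using sG by (auto simp: H_def)
  then have "measure_pmf.prob (stage1_update E \<phi> q l x C F P \<alpha>) {r. \<exists>f. snd r = Some f \<and> v \<in> f}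
      = measure_pmf.prob (pmf_of_set {1..l}) {l'. v = P!(l'-1) \<or> v = P!l'}"
    unfolding eq by simp
  also have "\<dots> = card ({1..l} \<inter> {l'. v = P!(l'-1) \<or> v = P!l'}) / card {1..l}"
    using assms by (subst measure_pmf_of_set) auto
  also have "\<dots> = card {l'\<in>{1..l}. v = P!(l'-1) \<or> v = P!l'} / l"
    by (simp add: Int_def)
  finally show ?thesis .
qed


definition branch where
  "branch n E q \<kappa> l U \<phi> e x C = (case vizing_chain E \<phi> q e x C l of
          None \<Rightarrow> return_pmf [(\<phi>, C, None)]
        | Some ((F, P), \<alpha>) \<Rightarrow>
            bind_pmf (stage1_update E \<phi> q l x C F P \<alpha>) (\<lambda>(\<phi>', fl).
            map_pmf (Cons (\<phi>, C, fl)) (stage1_loop n E q \<kappa> l (U - {e}) \<phi>')))"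

lemma loop_Suc: "U \<noteq> {} \<Longrightarrow> stage1_loop (Suc n) E q \<kappa> l U \<phi> =
   bind_pmf (pmf_of_set U) (\<lambda>e. bind_pmf (pmf_of_set e) (\<lambda>x.
     bind_pmf (map_pmf set (sample_list \<kappa> {1..q})) (\<lambda>C. branch n E q \<kappa> l U \<phi> e x C)))"
  by (simp add: branch_def)

lemma branch_supp: "t \<in> set_pmf (branch n E q \<kappa> l U \<phi> e x C) \<Longrightarrow> \<exists>fl r. t = (\<phi>, C, fl) # r"
  by (auto simp: branch_def split: option.splits)

lemma at1:
  "phi_at ((\<phi>, C, fl) # r) 1 = Some \<phi>" "C_at ((\<phi>, C, fl) # r) 1 = Some C"
  "flagged_at ((\<phi>, C, fl) # r) 1 v \<longleftrightarrow> (\<exists>f. fl = Some f \<and> v \<in> f)"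
  by (auto simp: phi_at_def C_at_def flagged_at_def)

lemma atSuc:
  assumes "1 \<le> i"
  shows "phi_at (h # r) (Suc i) = phi_at r i" "C_at (h # r) (Suc i) = C_at r i"
    "flagged_at (h # r) (Suc i) v \<longleftrightarrow> flagged_at r i v"
  using assms by (auto simp: phi_at_def C_at_def flagged_at_def)

lemma flagged_short: "flagged_at t i v \<Longrightarrow> i \<le> length t"
  by (simp add: flagged_at_def)

lemma hflag:
  assumes "e \<in> U" "x \<in> e" "1 \<le> l"
  shows "measure_pmf.prob (branch n E q \<kappa> l U \<phi> e x C) {t. flagged_at t 1 v} \<le> card (Lset E \<phi> q C l v e x) / l"
proof (cases "vizing_chain E \<phi> q e x C l")
  case None
  then have "measure_pmf.prob (branch n E q \<kappa> l U \<phi> e x C) {t. flagged_at t 1 v} = 0"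
    by (simp add: branch_def flagged_at_def)
  then show ?thesis by simp
next
  case (Some r0)
  obtain F P \<alpha> where r0: "r0 = ((F,P),\<alpha>)" by (metis prod.collapse)
  have br: "branch n E q \<kappa> l U \<phi> e x C = bind_pmf (stage1_update E \<phi> q l x C F P \<alpha>) (\<lambda>(\<phi>', fl).
            map_pmf (Cons (\<phi>, C, fl)) (stage1_loop n E q \<kappa> l (U - {e}) \<phi>'))"
    using Some r0 by (simp add: branch_def)
  show ?thesis
  proof (cases "length P - 1 = l")
    case False
    have "measure_pmf.prob (branch n E q \<kappa> l U \<phi> e x C) {t. flagged_at t 1 v} = 0"
      unfolding measure_pmf_zero_iff br
      using upd_noflag[OF False] by (fastforce simp: flagged_at_def)
    then show ?thesis by simp
  next
    case True
    have "measure_pmf.prob (branch n E q \<kappa> l U \<phi> e x C) {t. flagged_at t 1 v}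
        \<le> measure_pmf.prob (stage1_update E \<phi> q l x C F P \<alpha>) {r. \<exists>f. snd r = Some f \<and> v \<in> f}"
      unfolding br by (rule bind_le_ind) (auto simp: flagged_at_def split: prod.splits)
    also have "\<dots> = card {l'\<in>{1..l}. v = P!(l'-1) \<or> v = P!l'} / l"
      using upd_flag_prob[OF True] assms(3) by simp
    also have "{l'\<in>{1..l}. v = P!(l'-1) \<or> v = P!l'} = Lset E \<phi> q C l v e x"
      using Some r0 True by (auto simp: Lset_def)
    finally show ?thesis .
  qed
qed


lemma first_iter:
  assumes G: "simple_graph V E" and iv: "inv_ok E U \<phi>" and fU: "finite U" and Une: "U \<noteq> {}" and l: "1 \<le> l"
  shows "measure_pmf.prob (stage1_loop (Suc n) E q \<kappa> l U \<phi>)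
      ({t. phi_at t 1 = a \<and> C_at t 1 = b} \<inter> {t. flagged_at t 1 v})
    \<le> (real (max_degree V E) * real \<kappa> ^ 2 / (real l * real (card U))) *
      measure_pmf.prob (stage1_loop (Suc n) E q \<kappa> l U \<phi>) {t. phi_at t 1 = a \<and> C_at t 1 = b}"
proof -
  define Cd where "Cd = map_pmf set (sample_list \<kappa> {1..q})"
  define br where "br = branch n E q \<kappa> l U \<phi>"
  define K where "K = real (max_degree V E) * real \<kappa> ^ 2 / (real l * real (card U))"
  define A where "A = {t. phi_at t 1 = a \<and> C_at t 1 = b}"
  define B where "B = {t. flagged_at t 1 v}"
  have K0: "K \<ge> 0" by (simp add: K_def)
  have sg: "\<forall>f\<in>E. card f = 2" using G by (simp add: simple_graph_def)
  have UE: "U \<subseteq> E" using iv by (simp add: inv_ok_def)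
  have ce: "\<And>e. e \<in> U \<Longrightarrow> card e = 2" using sg UE by blast
  have fe: "\<And>e. e \<in> U \<Longrightarrow> finite e \<and> e \<noteq> {}"
    using ce by (metis card.empty card.infinite zero_neq_numeral)
  have eq: "stage1_loop (Suc n) E q \<kappa> l U \<phi> =
      bind_pmf Cd (\<lambda>C. bind_pmf (pmf_of_set U) (\<lambda>e. bind_pmf (pmf_of_set e) (\<lambda>x. br e x C)))"
  proof -
    have "stage1_loop (Suc n) E q \<kappa> l U \<phi> =
       bind_pmf (pmf_of_set U) (\<lambda>e. bind_pmf (pmf_of_set e) (\<lambda>x. bind_pmf Cd (\<lambda>C. br e x C)))"
      using loop_Suc[OF Une] by (simp add: Cd_def br_def)
    also have "\<dots> = bind_pmf (pmf_of_set U) (\<lambda>e. bind_pmf Cd (\<lambda>C. bind_pmf (pmf_of_set e) (\<lambda>x. br e x C)))"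
      by (subst bind_commute_pmf) (rule refl)
    also have "\<dots> = bind_pmf Cd (\<lambda>C. bind_pmf (pmf_of_set U) (\<lambda>e. bind_pmf (pmf_of_set e) (\<lambda>x. br e x C)))"
      by (rule bind_commute_pmf)
    finally show ?thesis .
  qed
  have main: "measure_pmf.prob (bind_pmf (pmf_of_set U) (\<lambda>e. bind_pmf (pmf_of_set e) (\<lambda>x. br e x C))) (A \<inter> B)
     \<le> K * measure_pmf.prob (bind_pmf (pmf_of_set U) (\<lambda>e. bind_pmf (pmf_of_set e) (\<lambda>x. br e x C))) A"
    if C: "C \<in> set_pmf Cd" for C
  proof -
    define Q where "Q = bind_pmf (pmf_of_set U) (\<lambda>e. bind_pmf (pmf_of_set e) (\<lambda>x. br e x C))"
    have fC: "finite C" and cC: "card C \<le> \<kappa>" using sample_set_card C by (auto simp: Cd_def)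
    have supp: "\<exists>fl r. t = (\<phi>, C, fl) # r" if "t \<in> set_pmf Q" for t
    proof -
      from that obtain e x where "e \<in> U" "x \<in> e" "t \<in> set_pmf (br e x C)"
        using fU Une fe by (auto simp: Q_def)
      then show ?thesis using branch_supp by (simp add: br_def)
    qed
    show ?thesis
    proof (cases "a = Some \<phi> \<and> b = Some C")
      case False
      have "measure_pmf.prob Q (A \<inter> B) = 0"
        unfolding measure_pmf_zero_iff
      proof (rule equals0I)
        fix t assume "t \<in> set_pmf Q \<inter> (A \<inter> B)"
        then obtain fl r where "t = (\<phi>, C, fl) # r" "t \<in> A" using supp by blast
        then show False using False by (simp add: A_def phi_at_def C_at_def)
      qed
      then show ?thesis using K0 by (simp add: Q_def[symmetric] measure_nonneg)
    next
      case True
      have PA: "measure_pmf.prob Q A = 1"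
      proof (subst measure_pmf.prob_eq_1)
        show "AE t in measure_pmf Q. t \<in> A"
          unfolding AE_measure_pmf_iff using supp True by (fastforce simp: A_def phi_at_def C_at_def)
      qed simp
      have "measure_pmf.prob Q (A \<inter> B) \<le> measure_pmf.prob Q B"
        by (rule measure_pmf.finite_measure_mono) auto
      also have "\<dots> = (\<Sum>e\<in>U. (\<Sum>x\<in>e. measure_pmf.prob (br e x C) B) / card e) / card U"
        unfolding Q_def using fU Une fe by (simp add: prob_bind_pmf_of_set)
      also have "\<dots> \<le> (\<Sum>e\<in>U. (\<Sum>x\<in>e. real (card (Lset E \<phi> q C l v e x)) / l) / 2) / card U"
      proof (rule divide_right_mono[OF sum_mono])
        fix e assume e: "e \<in> U"
        have "(\<Sum>x\<in>e. measure_pmf.prob (br e x C) B) \<le> (\<Sum>x\<in>e. real (card (Lset E \<phi> q C l v e x)) / l)"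
          by (rule sum_mono) (use hflag[OF e _ l] in \<open>simp add: br_def B_def\<close>)
        then show "(\<Sum>x\<in>e. measure_pmf.prob (br e x C) B) / card e \<le> (\<Sum>x\<in>e. real (card (Lset E \<phi> q C l v e x)) / l) / 2"
          using ce[OF e] by (simp add: divide_right_mono)
      qed simp
      also have "\<dots> = real (\<Sum>e\<in>U. \<Sum>x\<in>e. card (Lset E \<phi> q C l v e x)) / (2 * l * card U)"
        by (simp add: sum_divide_distrib[symmetric] of_nat_sum)
      also have "\<dots> \<le> real (2 * max_degree V E * \<kappa>^2) / (2 * l * card U)"
      proof -
        have cb: "real (\<Sum>e\<in>U. \<Sum>x\<in>e. card (Lset E \<phi> q C l v e x)) \<le> real (2 * max_degree V E * \<kappa>^2)"
          using count_bound[OF G iv fU fC cC l, of q v] by (simp only: of_nat_le_iff)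
        show ?thesis by (rule divide_right_mono[OF cb]) simp
      qed
      also have "\<dots> = K" by (simp add: K_def)
      finally show ?thesis using PA by (simp add: Q_def)
    qed
  qed
  show ?thesis
    unfolding eq A_def[symmetric] B_def[symmetric] K_def[symmetric]
    by (rule bind_le[OF main K0])
qed


lemma vimage_Cons_events:
  assumes "1 \<le> i"
  shows "Cons h -` ({t. phi_at t (Suc i) = a \<and> C_at t (Suc i) = b} \<inter> {t. flagged_at t (Suc i) v})
       = {t. phi_at t i = a \<and> C_at t i = b} \<inter> {t. flagged_at t i v}"
    and "Cons h -` {t. phi_at t (Suc i) = a \<and> C_at t (Suc i) = b} = {t. phi_at t i = a \<and> C_at t i = b}"
  by (simp_all add: atSuc[OF assms] vimage_def set_eq_iff)

lemma loop_bound: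
  assumes G: "simple_graph V E" and l: "1 \<le> l"
  shows "inv_ok E U \<phi> \<Longrightarrow> finite U \<Longrightarrow> 1 \<le> i \<Longrightarrow> i \<le> card U \<Longrightarrow>
    measure_pmf.prob (stage1_loop n E q \<kappa> l U \<phi>) ({t. phi_at t i = a \<and> C_at t i = b} \<inter> {t. flagged_at t i v})
    \<le> (real (max_degree V E) * real \<kappa> ^ 2 / (real l * real (card U - i + 1))) *
       measure_pmf.prob (stage1_loop n E q \<kappa> l U \<phi>) {t. phi_at t i = a \<and> C_at t i = b}"
proof (induction n arbitrary: U \<phi> i)
  case 0
  then show ?case by (simp add: flagged_at_def measure_nonneg)
next
  case (Suc n)
  have sg: "\<forall>f\<in>E. card f = 2" using G by (simp add: simple_graph_def)
  have Une: "U \<noteq> {}" using Suc.prems by auto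
  show ?case
  proof (cases "i = 1")
    case True
    have c: "card U - i + 1 = card U" using True Suc.prems(4) by simp
    show ?thesis unfolding c unfolding True by (rule first_iter[OF G Suc.prems(1,2) Une l])
  next
    case False
    then obtain i' where i': "i = Suc i'" "1 \<le> i'" using Suc.prems(3) by (cases i) auto
    define K where "K = real (max_degree V E) * real \<kappa> ^ 2 / (real l * real (card U - i + 1))"
    have K0: "K \<ge> 0" by (simp add: K_def)
    have UE: "U \<subseteq> E" using Suc.prems(1) by (simp add: inv_ok_def)
    have fe: "\<And>e. e \<in> U \<Longrightarrow> finite e \<and> e \<noteq> {}"
      using sg UE by (metis card.empty card.infinite subsetD zero_neq_numeral)
    have br: "measure_pmf.prob (branch n E q \<kappa> l U \<phi> e x C) ({t. phi_at t i = a \<and> C_at t i = b} \<inter> {t. flagged_at t i v})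
       \<le> K * measure_pmf.prob (branch n E q \<kappa> l U \<phi> e x C) {t. phi_at t i = a \<and> C_at t i = b}"
      if e: "e \<in> U" and x: "x \<in> e" for e x C
    proof (cases "vizing_chain E \<phi> q e x C l")
      case None
      then have "measure_pmf.prob (branch n E q \<kappa> l U \<phi> e x C) ({t. phi_at t i = a \<and> C_at t i = b} \<inter> {t. flagged_at t i v}) = 0"
        using i' by (simp add: branch_def flagged_at_def)
      then show ?thesis using K0 by (simp add: measure_nonneg)
    next
      case (Some r0)
      obtain F P \<alpha> where r0: "r0 = ((F,P),\<alpha>)" by (metis prod.collapse)
      have bq: "branch n E q \<kappa> l U \<phi> e x C = bind_pmf (stage1_update E \<phi> q l x C F P \<alpha>) (\<lambda>(\<phi>', fl).
            map_pmf (Cons (\<phi>, C, fl)) (stage1_loop n E q \<kappa> l (U - {e}) \<phi>'))"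
        using Some r0 by (simp add: branch_def)
      show ?thesis unfolding bq
      proof (rule bind_le[OF _ K0])
        fix r assume r: "r \<in> set_pmf (stage1_update E \<phi> q l x C F P \<alpha>)"
        obtain \<phi>' fl where rr: "r = (\<phi>', fl)" by (cases r)
        have inv_ok': "inv_ok E (U - {e}) \<phi>'"
          by (rule step_inv[OF sg Suc.prems(1) e x l _ r[unfolded rr]]) (use Some r0 in simp)
        have fU': "finite (U - {e})" using Suc.prems(2) by simp
        have cU: "card (U - {e}) = card U - 1" using e Suc.prems(2) by simp
        have ile: "i' \<le> card (U - {e})" using cU i' Suc.prems(4) by simp
        have Keq: "card (U - {e}) - i' + 1 = card U - i + 1" using cU i' Suc.prems(4) by simp
        have IH: "measure_pmf.prob (stage1_loop n E q \<kappa> l (U - {e}) \<phi>') ({t. phi_at t i' = a \<and> C_at t i' = b} \<inter> {t. flagged_at t i' v})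
          \<le> K * measure_pmf.prob (stage1_loop n E q \<kappa> l (U - {e}) \<phi>') {t. phi_at t i' = a \<and> C_at t i' = b}"
          using Suc.IH[OF inv_ok' fU' i'(2) ile] Keq by (simp add: K_def)
        show "measure_pmf.prob (case r of (\<phi>', fl) \<Rightarrow> map_pmf (Cons (\<phi>, C, fl)) (stage1_loop n E q \<kappa> l (U - {e}) \<phi>'))
            ({t. phi_at t i = a \<and> C_at t i = b} \<inter> {t. flagged_at t i v})
          \<le> K * measure_pmf.prob (case r of (\<phi>', fl) \<Rightarrow> map_pmf (Cons (\<phi>, C, fl)) (stage1_loop n E q \<kappa> l (U - {e}) \<phi>'))
            {t. phi_at t i = a \<and> C_at t i = b}"
          unfolding rr i'(1) using IH by (simp add: atSuc[OF i'(2)])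
      qed
    qed
    show ?thesis
      unfolding loop_Suc[OF Une] K_def[symmetric]
    proof (rule bind_le[OF _ K0])
      fix e assume e: "e \<in> set_pmf (pmf_of_set U)"
      then have eU: "e \<in> U" using Suc.prems(2) Une by simp
      show "measure_pmf.prob (bind_pmf (pmf_of_set e) (\<lambda>x. bind_pmf (map_pmf set (sample_list \<kappa> {1..q})) (branch n E q \<kappa> l U \<phi> e x)))
           ({t. phi_at t i = a \<and> C_at t i = b} \<inter> {t. flagged_at t i v})
         \<le> K * measure_pmf.prob (bind_pmf (pmf_of_set e) (\<lambda>x. bind_pmf (map_pmf set (sample_list \<kappa> {1..q})) (branch n E q \<kappa> l U \<phi> e x)))
           {t. phi_at t i = a \<and> C_at t i = b}"
      proof (rule bind_le[OF _ K0])
        fix x assume "x \<in> set_pmf (pmf_of_set e)"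
        then have xe: "x \<in> e" using fe[OF eU] by simp
        show "measure_pmf.prob (bind_pmf (map_pmf set (sample_list \<kappa> {1..q})) (branch n E q \<kappa> l U \<phi> e x))
           ({t. phi_at t i = a \<and> C_at t i = b} \<inter> {t. flagged_at t i v})
         \<le> K * measure_pmf.prob (bind_pmf (map_pmf set (sample_list \<kappa> {1..q})) (branch n E q \<kappa> l U \<phi> e x))
           {t. phi_at t i = a \<and> C_at t i = b}"
          by (rule bind_le[OF br[OF eU xe] K0])
      qed
    qed
  qed
qed


lemma upd_l0: "r \<in> set_pmf (stage1_update E \<phi> q 0 x C F P \<alpha>) \<Longrightarrow> snd r = None"
  by (auto simp: stage1_update_def Let_def split: if_splits)

lemma loop_l0: "t \<in> set_pmf (stage1_loop n E q \<kappa> 0 U \<phi>) \<Longrightarrow> \<forall>r\<in>set t. snd (snd r) = None"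
proof (induction n arbitrary: U \<phi> t)
  case 0 then show ?case by simp
next
  case (Suc n)
  show ?case
  proof (cases "U = {}")
    case True then show ?thesis using Suc.prems by simp
  next
    case False
    from Suc.prems obtain e x C where ex: "t \<in> set_pmf (branch n E q \<kappa> 0 U \<phi> e x C)"
      unfolding loop_Suc[OF False] by auto
    show ?thesis
    proof (cases "vizing_chain E \<phi> q e x C 0")
      case None then show ?thesis using ex by (simp add: branch_def)
    next
      case (Some r0)
      obtain F P \<alpha> where r0: "r0 = ((F,P),\<alpha>)" by (metis prod.collapse)
      from ex Some r0 obtain \<phi>' fl t' where r: "(\<phi>', fl) \<in> set_pmf (stage1_update E \<phi> q 0 x C F P \<alpha>)"
        "t' \<in> set_pmf (stage1_loop n E q \<kappa> 0 (U - {e}) \<phi>')" "t = (\<phi>, C, fl) # t'"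
        by (auto simp: branch_def)
      have "fl = None" using upd_l0[OF r(1)] by simp
      then show ?thesis using Suc.IH[OF r(2)] r(3) by simp
    qed
  qed
qed

lemma no_flag_l0: "measure_pmf.prob (stage1_loop n E q \<kappa> 0 U \<phi>) {t. flagged_at t i v} = 0"
  unfolding measure_pmf_zero_iff
proof (rule equals0I)
  fix t assume t: "t \<in> set_pmf (stage1_loop n E q \<kappa> 0 U \<phi>) \<inter> {t. flagged_at t i v}"
  then obtain f where f: "1 \<le> i" "i \<le> length t" "snd (snd (t ! (i - 1))) = Some f"
    by (auto simp: flagged_at_def)
  have "t ! (i - 1) \<in> set t" using f by simp
  then show False using loop_l0 t f by fastforce
qed

theorem lemma3p5:
  fixes V :: "'a set" and E :: "'a set set" and \<epsilon> :: real and q \<kappa> l i :: nat and v :: 'a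
    and a :: "'a coloring option" and b :: "nat set option"
  assumes G: "simple_graph V E"
    and eps: "0 < \<epsilon>" "\<epsilon> < 1"
    and q: "real q = (1 + \<epsilon> / 2) * real (max_degree V E)"
    and i: "1 \<le> i" "i \<le> card E"
    and pos: "measure_pmf.prob (stage1 E q \<kappa> l) {t. phi_at t i = a \<and> C_at t i = b} > 0"
  shows "measure_pmf.prob (cond_pmf (stage1 E q \<kappa> l) {t. phi_at t i = a \<and> C_at t i = b})
             {t. flagged_at t i v}
           \<le> real (max_degree V E) * real \<kappa> ^ 2 / (real l * real (card E - i + 1))
       \<and> (real l \<ge> 50 * real \<kappa> ^ 2 * ln (real (card V)) / \<epsilon> \<longrightarrow>
          measure_pmf.prob (cond_pmf (stage1 E q \<kappa> l) {t. phi_at t i = a \<and> C_at t i = b})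
             {t. flagged_at t i v}
           \<le> \<epsilon> * real (max_degree V E) / (50 * real (card E - i + 1) * ln (real (card V))))"
proof -
  define p where "p = stage1 E q \<kappa> l"
  define A where "A = {t. phi_at t i = a \<and> C_at t i = b}"
  define B where "B = {t. flagged_at t i v}"
  define X where "X = measure_pmf.prob (cond_pmf p A) B"
  define \<Delta> where "\<Delta> = real (max_degree V E)"
  define m' where "m' = real (card E - i + 1)"
  have fV: "finite V" and EV: "\<forall>e\<in>E. e \<subseteq> V \<and> card e = 2" using G by (auto simp: simple_graph_def)
  have fE: "finite E" using G by (metis finite_Pow_iff finite_subset simple_graph_def subsetI PowI)
  have pA: "measure_pmf.prob p A > 0" using pos by (simp add: p_def A_def)
  have ne: "set_pmf p \<inter> A \<noteq> {}" using pA measure_pmf_zero_iff[of p A] by auto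
  have X: "X = measure_pmf.prob p (A \<inter> B) / measure_pmf.prob p A"
    unfolding X_def by (rule prob_cond_pmf[OF ne])
  have m'pos: "m' > 0" by (simp add: m'_def)
  have D0: "\<Delta> \<ge> 0" by (simp add: \<Delta>_def)
  have X0: "X \<ge> 0" unfolding X_def by (simp add: measure_nonneg)
  have claim1: "X \<le> \<Delta> * real \<kappa> ^ 2 / (real l * m')"
  proof (cases "l = 0")
    case True
    have "measure_pmf.prob p (A \<inter> B) \<le> measure_pmf.prob p B"
      by (rule measure_pmf.finite_measure_mono) auto
    also have "\<dots> = 0" unfolding p_def stage1_def B_def True by (rule no_flag_l0)
    finally have "measure_pmf.prob p (A \<inter> B) = 0" by (simp add: measure_nonneg antisym)
    then show ?thesis using True X by simp
  next
    case False
    then have l: "1 \<le> l" by simp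
    have iv: "inv_ok E E (\<lambda>_. None)" by (simp add: inv_ok_def proper_def supp_ok_def)
    have "measure_pmf.prob p (A \<inter> B) \<le> (\<Delta> * real \<kappa> ^ 2 / (real l * m')) * measure_pmf.prob p A"
      unfolding p_def stage1_def A_def B_def \<Delta>_def m'_def
      by (rule loop_bound[OF G l iv fE i])
    then show ?thesis using X pA by (simp add: divide_le_eq)
  qed
  have claim2: "X \<le> \<epsilon> * \<Delta> / (50 * m' * ln (real (card V)))"
    if h: "real l \<ge> 50 * real \<kappa> ^ 2 * ln (real (card V)) / \<epsilon>"
  proof -
    have "E \<noteq> {}" using i by auto
    then obtain e where e: "e \<in> E" by blast
    have ce: "card e = 2" and eV: "e \<subseteq> V" using EV e by auto
    have "card e \<le> card V" by (rule card_mono[OF fV eV])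
    then have "2 \<le> card V" using ce by simp
    then have L: "ln (real (card V)) > 0" by simp
    define Lg where "Lg = ln (real (card V))"
    have RHS0: "\<epsilon> * \<Delta> / (50 * m' * Lg) \<ge> 0" using eps D0 m'pos L by (simp add: Lg_def)
    show ?thesis
    proof (cases "\<kappa> = 0")
      case True
      then show ?thesis using claim1 RHS0 by (simp add: Lg_def)
    next
      case False
      define c where "c = 50 * real \<kappa> ^ 2 * Lg / \<epsilon>"
      have c0: "c > 0" using False L eps by (simp add: c_def Lg_def)
      have lc: "real l \<ge> c" using h by (simp add: c_def Lg_def)
      have "\<Delta> * real \<kappa> ^ 2 / (real l * m') \<le> \<Delta> * real \<kappa> ^ 2 / (c * m')"
        using c0 lc m'pos D0 by (intro divide_left_mono mult_right_mono mult_pos_pos) auto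
      also have "\<dots> = \<epsilon> * \<Delta> / (50 * m' * Lg)"
        using False L eps m'pos by (simp add: c_def Lg_def field_simps)
      finally show ?thesis using claim1 by (simp add: Lg_def)
    qed
  qed
  show ?thesis using claim1 claim2
    unfolding X_def p_def A_def B_def \<Delta>_def m'_def by simp
qed

end
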